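(* (a) Let $X$ be an irreducible subvariety of $\mathrm{Sym}_2(\mathbb C^m)$. Then $\mathrm{MLD}_{\det}(X)$ equals the usual Gaussian ML degree of $X$, i.e. the number of complex critical points of $K\mapsto \log\det(K)-\mathrm{tr}(KS)$ on $X^{\mathrm{sm}}\setminus V(\det)$ for a general complex symmetric matrix $S\in\mathrm{Sym}_2(\mathbb C^m)$. (b) Conversely, let $\mathcal L$ be a finite-dimensional complex vector space, $X\subseteq\mathcal L$ an irreducible affine variety and $F$ a polynomial on $\mathcal L$. Then there exist an integer $m$ and an injective affine-linear map $\mathcal A:\mathcal L\to\mathrm{Sym}_2(\mathbb C^m)$ such that $\mathrm{MLD}_F(X)=\mathrm{MLD}_{\det}(\mathcal A(X))$.
   Context: Let $\mathcal L$ be a finite-dimensional complex vector space with dual $\mathcal L^*$. For a polynomial $F$ on $\mathcal L$, $\mathbf u\in\mathcal L^*$ and $p\in\mathcal L\setminus V(F)$, the (Gaussian) log-likelihood is $\ell_{F,\mathbf u}(p)=\log F(p)-\mathbf u(p)$; its gradient $\nabla_p\ell_{F,\mathbf u}=\nabla_pF/F(p)-\mathbf u\in\mathcal L^*$ does not depend on the branch of the logarithm. For an irreducible affine variety $Y\subseteq\mathcal L$, the ML degree $\mathrm{MLD}_F(Y)$ is the number of points $p\in Y^{\mathrm{sm}}\setminus V(F)$ ($Y^{\mathrm{sm}}$ the smooth locus) with $T_pY\subseteq\ker(\nabla_p\ell_{F,\mathbf u})$, for general $\mathbf u\in\mathcal L^*$. Here $\det$ denotes the determinant polynomial on $\mathrm{Sym}_2(\mathbb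 C^m)$, the space of complex symmetric $m\times m$ matrices. *)

theory Defs
  imports "HOL-Analysis.Derivative" "Jordan_Normal_Form.Determinant"
begin

text \<open>A finite-dimensional complex vector space is modelled as the coordinate space
  with a finite index set I: points are maps x :: 'i => complex vanishing outside I.\<close>

definition cspace :: "'i set \<Rightarrow> ('i \<Rightarrow> complex) set" where
  "cspace I = {x. \<forall>i. i \<notin> I \<longrightarrow> x i = 0}"

inductive_set polyfun :: "'i set \<Rightarrow> (('i \<Rightarrow> complex) \<Rightarrow> complex) set" for I where
  const: "(\<lambda>x. c) \<in> polyfun I"
| coord: "i \<in> I \<Longrightarrow> (\<lambda>x. x i) \<in> polyfun I"
| add: "f \<in> polyfun I \<Longrightarrow> g \<in> polyfun I \<Longrightarrow> (\<lambda>x. f x + g x) \<in> polyfun I"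
| mult: "f \<in> polyfun I \<Longrightarrow> g \<in> polyfun I \<Longrightarrow> (\<lambda>x. f x * g x) \<in> polyfun I"

definition zero_set :: "'i set \<Rightarrow> (('i \<Rightarrow> complex) \<Rightarrow> complex) set \<Rightarrow> ('i \<Rightarrow> complex) set" where
  "zero_set I P = {x \<in> cspace I. \<forall>f\<in>P. f x = 0}"

definition affine_variety :: "'i set \<Rightarrow> ('i \<Rightarrow> complex) set \<Rightarrow> bool" where
  "affine_variety I Y \<longleftrightarrow> (\<exists>P \<subseteq> polyfun I. Y = zero_set I P)"

definition irreducible_variety :: "'i set \<Rightarrow> ('i \<Rightarrow> complex) set \<Rightarrow> bool" where
  "irreducible_variety I Y \<longleftrightarrow> affine_variety I Y \<and> Y \<noteq> {} \<and>
     (\<forall>Z1 Z2. affine_variety I Z1 \<and> affine_variety I Z2 \<and> Y \<subseteq> Z1 \<union> Z2 \<longrightarrow> Y \<subseteq> Z1 \<or> Y \<subseteq> Z2)"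

definition vanishing_ideal :: "'i set \<Rightarrow> ('i \<Rightarrow> complex) set \<Rightarrow> (('i \<Rightarrow> complex) \<Rightarrow> complex) set" where
  "vanishing_ideal I Y = {f \<in> polyfun I. \<forall>x\<in>Y. f x = 0}"

definition dirderiv :: "(('i \<Rightarrow> complex) \<Rightarrow> complex) \<Rightarrow> ('i \<Rightarrow> complex) \<Rightarrow> ('i \<Rightarrow> complex) \<Rightarrow> complex" where
  "dirderiv f p v = deriv (\<lambda>t::complex. f (\<lambda>i. p i + t * v i)) 0"

definition tangent_space :: "'i set \<Rightarrow> ('i \<Rightarrow> complex) set \<Rightarrow> ('i \<Rightarrow> complex) \<Rightarrow> ('i \<Rightarrow> complex) set" where
  "tangent_space I Y p = {v \<in> cspace I. \<forall>f\<in>vanishing_ideal I Y. dirderiv f p v = 0}"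

definition cindep :: "('i \<Rightarrow> complex) set \<Rightarrow> bool" where
  "cindep S \<longleftrightarrow> finite S \<and>
     (\<forall>c. (\<forall>i. (\<Sum>v\<in>S. c v * v i) = 0) \<longrightarrow> (\<forall>v\<in>S. c v = 0))"

definition cdim :: "('i \<Rightarrow> complex) set \<Rightarrow> nat" where
  "cdim T = Sup {card S | S. S \<subseteq> T \<and> cindep S}"

definition var_dim :: "'i set \<Rightarrow> ('i \<Rightarrow> complex) set \<Rightarrow> nat" where
  "var_dim I Y = Sup {n. \<exists>Z :: nat \<Rightarrow> ('i \<Rightarrow> complex) set.
      (\<forall>k\<le>n. irreducible_variety I (Z k) \<and> Z k \<subseteq> Y) \<and> (\<forall>k<n. Z k \<subset> Z (Suc k))}"

definition smooth_locus :: "'i set \<Rightarrow> ('i \<Rightarrow> complex) set \<Rightarrow> ('i \<Rightarrow> complex) set" where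
  "smooth_locus I Y = {p \<in> Y. cdim (tangent_space I Y p) = var_dim I Y}"

definition general :: "'i set \<Rightarrow> (('i \<Rightarrow> complex) \<Rightarrow> bool) \<Rightarrow> bool" where
  "general I Q \<longleftrightarrow> (\<exists>Z. affine_variety I Z \<and> Z \<noteq> cspace I \<and> (\<forall>u\<in>cspace I - Z. Q u))"

text \<open>Linear functionals u in L^* are given by coefficient vectors u in cspace I,
  u(v) = sum over i in I of u i * v i. Critical points of the log-likelihood.\<close>
definition ml_crit :: "'i set \<Rightarrow> (('i \<Rightarrow> complex) \<Rightarrow> complex) \<Rightarrow> ('i \<Rightarrow> complex) set
     \<Rightarrow> ('i \<Rightarrow> complex) \<Rightarrow> ('i \<Rightarrow> complex) set" where
  "ml_crit I F Y u = {p \<in> smooth_locus I Y. F p \<noteq> 0 \<and>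
     (\<forall>v\<in>tangent_space I Y p. dirderiv F p v / F p - (\<Sum>i\<in>I. u i * v i) = 0)}"

definition MLD :: "'i set \<Rightarrow> (('i \<Rightarrow> complex) \<Rightarrow> complex) \<Rightarrow> ('i \<Rightarrow> complex) set \<Rightarrow> nat" where
  "MLD I F Y = (THE N. general I (\<lambda>u. finite (ml_crit I F Y u) \<and> card (ml_crit I F Y u) = N))"

text \<open>Sym_2(C^m): coordinates x (i,j) with i \<le> j < m.\<close>
definition symidx :: "nat \<Rightarrow> (nat \<times> nat) set" where
  "symidx m = {(i,j). i \<le> j \<and> j < m}"

definition symmat :: "nat \<Rightarrow> (nat \<times> nat \<Rightarrow> complex) \<Rightarrow> complex mat" where
  "symmat m x = mat m m (\<lambda>(i,j). x (min i j, max i j))"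

definition detF :: "nat \<Rightarrow> (nat \<times> nat \<Rightarrow> complex) \<Rightarrow> complex" where
  "detF m x = det (symmat m x)"

text \<open>Usual Gaussian ML degree: critical points of K \<mapsto> log det K - tr(K S), whose
  derivative in direction V is D det_K(V)/det K - tr(V S).\<close>
definition gauss_crit :: "nat \<Rightarrow> (nat \<times> nat \<Rightarrow> complex) set \<Rightarrow> (nat \<times> nat \<Rightarrow> complex)
     \<Rightarrow> (nat \<times> nat \<Rightarrow> complex) set" where
  "gauss_crit m X S = {K \<in> smooth_locus (symidx m) X. detF m K \<noteq> 0 \<and>
     (\<forall>V\<in>tangent_space (symidx m) X K.
        dirderiv (detF m) K V / detF m K
        - (\<Sum>i<m. \<Sum>j<m. symmat m V $$ (i,j) * symmat m S $$ (j,i)) = 0)}"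

definition gaussian_MLD :: "nat \<Rightarrow> (nat \<times> nat \<Rightarrow> complex) set \<Rightarrow> nat" where
  "gaussian_MLD m X = (THE N. general (symidx m)
      (\<lambda>S. finite (gauss_crit m X S) \<and> card (gauss_crit m X S) = N))"

end

theory Submission
  imports Defs
begin


lemma polyfun_sum:
  assumes "finite S" "\<And>s. s \<in> S \<Longrightarrow> f s \<in> polyfun I"
  shows "(\<lambda>x. \<Sum>s\<in>S. f s x) \<in> polyfun I"
  using assms
proof (induction S rule: finite_induct)
  case empty
  then show ?case using polyfun.const[of 0 I] by simp
next
  case (insert s S)
  then show ?case using polyfun.add[of "f s" I "\<lambda>x. \<Sum>s\<in>S. f s x"] by simp
qed

lemma polyfun_cmult: "f \<in> polyfun I \<Longrightarrow> (\<lambda>x. c * f x) \<in> polyfun I"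
  using polyfun.mult[OF polyfun.const] by blast

lemma polyfun_diff: "f \<in> polyfun I \<Longrightarrow> g \<in> polyfun I \<Longrightarrow> (\<lambda>x. f x - g x) \<in> polyfun I"
proof -
  assume f: "f \<in> polyfun I" and g: "g \<in> polyfun I"
  have "(\<lambda>x. f x + (-1) * g x) \<in> polyfun I"
    by (rule polyfun.add[OF f polyfun_cmult[OF g]])
  then show ?thesis by simp
qed

lemma polyfun_pullback:
  assumes "f \<in> polyfun J" "\<And>j. j \<in> J \<Longrightarrow> (\<lambda>x. G x j) \<in> polyfun I"
  shows "(\<lambda>x. f (G x)) \<in> polyfun I"
  using assms
proof (induction rule: polyfun.induct)
  case (const c)
  show ?case by (rule polyfun.const)
next
  case (coord i)
  then show ?case by simp
next
  case (add f g)
  then show ?case using polyfun.add by blast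
next
  case (mult f g)
  then show ?case using polyfun.mult by blast
qed

lemma zero_set_subset: "zero_set I P \<subseteq> cspace I"
  unfolding zero_set_def by auto

lemma affine_variety_subset: "affine_variety I Y \<Longrightarrow> Y \<subseteq> cspace I"
  unfolding affine_variety_def using zero_set_subset by blast

lemma zero_set_pullback:
  assumes G: "\<And>x. x \<in> cspace I \<Longrightarrow> G x \<in> cspace J"
    and Gp: "\<And>j. j \<in> J \<Longrightarrow> (\<lambda>x. G x j) \<in> polyfun I"
    and P: "P \<subseteq> polyfun J"
  shows "{x \<in> cspace I. G x \<in> zero_set J P} = zero_set I ((\<lambda>f x. f (G x)) ` P)"
    and "(\<lambda>f x. f (G x)) ` P \<subseteq> polyfun I"
proof -
  have pb: "(\<lambda>x. f (G x)) \<in> polyfun I" if "f \<in> P" for f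
    using polyfun_pullback[of f J G I] Gp P that by blast
  show "{x \<in> cspace I. G x \<in> zero_set J P} = zero_set I ((\<lambda>f x. f (G x)) ` P)"
    using G unfolding zero_set_def by auto
  show "(\<lambda>f x. f (G x)) ` P \<subseteq> polyfun I" using pb by blast
qed

lemma affine_variety_pullback:
  assumes G: "\<And>x. x \<in> cspace I \<Longrightarrow> G x \<in> cspace J"
    and Gp: "\<And>j. j \<in> J \<Longrightarrow> (\<lambda>x. G x j) \<in> polyfun I"
    and Z: "affine_variety J Z"
  shows "affine_variety I {x \<in> cspace I. G x \<in> Z}"
proof -
  from Z obtain P where P: "P \<subseteq> polyfun J" "Z = zero_set J P" unfolding affine_variety_def by blast
  show ?thesis unfolding affine_variety_def P(2)
    using zero_set_pullback[OF G Gp P(1)] by blast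
qed

lemma affine_variety_Inter:
  assumes "\<And>k. k \<in> K \<Longrightarrow> affine_variety I {x \<in> cspace I. Pr k x}"
  shows "affine_variety I {x \<in> cspace I. \<forall>k\<in>K. Pr k x}"
proof -
  have "\<forall>k\<in>K. \<exists>P. P \<subseteq> polyfun I \<and> {x \<in> cspace I. Pr k x} = zero_set I P"
    using assms unfolding affine_variety_def by blast
  then obtain PP where PP: "\<And>k. k \<in> K \<Longrightarrow> PP k \<subseteq> polyfun I \<and> {x \<in> cspace I. Pr k x} = zero_set I (PP k)"
    by metis
  have "{x \<in> cspace I. \<forall>k\<in>K. Pr k x} = zero_set I (\<Union>k\<in>K. PP k)"
  proof (rule Set.set_eqI, rule iffI)
    fix x assume x: "x \<in> {x \<in> cspace I. \<forall>k\<in>K. Pr k x}"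
    show "x \<in> zero_set I (\<Union>k\<in>K. PP k)"
      unfolding zero_set_def
    proof (safe)
      show "x \<in> cspace I" using x by simp
      fix k f assume k: "k \<in> K" and f: "f \<in> PP k"
      have "x \<in> zero_set I (PP k)" using PP[OF k] x k by blast
      then show "f x = 0" using f unfolding zero_set_def by blast
    qed
  next
    fix x assume x: "x \<in> zero_set I (\<Union>k\<in>K. PP k)"
    then have xc: "x \<in> cspace I" unfolding zero_set_def by blast
    have "Pr k x" if k: "k \<in> K" for k
    proof -
      have "x \<in> zero_set I (PP k)" using x k unfolding zero_set_def by blast
      then show ?thesis using PP[OF k] by blast
    qed
    then show "x \<in> {x \<in> cspace I. \<forall>k\<in>K. Pr k x}" using xc by blast
  qed
  moreover have "(\<Union>k\<in>K. PP k) \<subseteq> polyfun I" using PP by blast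
  ultimately show ?thesis unfolding affine_variety_def by blast
qed

lemma cspace_add: "a \<in> cspace J \<Longrightarrow> b \<in> cspace J \<Longrightarrow> (\<lambda>j. a j + b j) \<in> cspace J"
  unfolding cspace_def by auto
lemma cspace_diff: "a \<in> cspace J \<Longrightarrow> b \<in> cspace J \<Longrightarrow> (\<lambda>j. a j - b j) \<in> cspace J"
  unfolding cspace_def by auto

lemma general_transfer:
  assumes TJ: "\<And>w. w \<in> cspace J \<Longrightarrow> T w \<in> cspace I"
    and sI: "\<And>u. u \<in> cspace I \<Longrightarrow> s u \<in> cspace J"
    and Ts: "\<And>u. u \<in> cspace I \<Longrightarrow> T (s u) = u"
    and Tdiff: "\<And>w1 w2. w1 \<in> cspace J \<Longrightarrow> w2 \<in> cspace J \<Longrightarrow> T (\<lambda>k. w1 k - w2 k) = (\<lambda>i. T w1 i - T w2 i)"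
    and Tp: "\<And>i. i \<in> I \<Longrightarrow> (\<lambda>w. T w i) \<in> polyfun J"
    and sp: "\<And>k0 k. k \<in> J \<Longrightarrow> (\<lambda>u. s u k + k0 k) \<in> polyfun I"
    and Qeq: "\<And>w. w \<in> cspace J \<Longrightarrow> Q' w = Q (T w)"
  shows "general J Q' = general I Q"
proof
  assume "general J Q'"
  then obtain Z' where Z': "affine_variety J Z'" "Z' \<noteq> cspace J" "\<forall>w\<in>cspace J - Z'. Q' w"
    unfolding general_def by blast
  define K where "K = {k \<in> cspace J. T k = (\<lambda>i. 0)}"
  define Z where "Z = {u \<in> cspace I. \<forall>k\<in>K. (\<lambda>j. s u j + k j) \<in> Z'}"
  have "affine_variety I Z" unfolding Z_def
  proof (rule affine_variety_Inter)
    fix k assume k: "k \<in> K"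
    then have kJ: "k \<in> cspace J" unfolding K_def by blast
    show "affine_variety I {x \<in> cspace I. (\<lambda>j. s x j + k j) \<in> Z'}"
    proof (rule affine_variety_pullback[OF _ _ Z'(1)])
      fix x assume "x \<in> cspace I"
      then show "(\<lambda>j. s x j + k j) \<in> cspace J" using cspace_add[OF sI kJ] by blast
    next
      fix j assume "j \<in> J"
      then show "(\<lambda>x. s x j + k j) \<in> polyfun I" by (rule sp)
    qed
  qed
  moreover have "Z \<noteq> cspace I"
  proof -
    have "Z' \<subseteq> cspace J" using affine_variety_subset[OF Z'(1)] .
    with Z'(2) obtain w where w: "w \<in> cspace J" "w \<notin> Z'" by blast
    define u where "u = T w"
    have u: "u \<in> cspace I" using TJ w u_def by blast
    have su: "s u \<in> cspace J" using sI[OF u] .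
    define k where "k = (\<lambda>j. w j - s u j)"
    have kJ: "k \<in> cspace J" unfolding k_def by (rule cspace_diff[OF w(1) su])
    have "T k = (\<lambda>i. T w i - T (s u) i)" unfolding k_def by (rule Tdiff[OF w(1) su])
    also have "\<dots> = (\<lambda>i. 0)" using Ts[OF u] u_def by simp
    finally have kK: "k \<in> K" unfolding K_def using kJ by blast
    have "(\<lambda>j. s u j + k j) = w" unfolding k_def by auto
    then have "u \<notin> Z" using kK w unfolding Z_def by auto
    then show ?thesis using u by blast
  qed
  moreover have "\<forall>u\<in>cspace I - Z. Q u"
  proof
    fix u assume u: "u \<in> cspace I - Z"
    then obtain k where k: "k \<in> K" "(\<lambda>j. s u j + k j) \<notin> Z'" unfolding Z_def by blast
    have kJ: "k \<in> cspace J" and Tk: "T k = (\<lambda>i. 0)" using k unfolding K_def by blast+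
    have su: "s u \<in> cspace J" using sI u by blast
    define w where "w = (\<lambda>j. s u j + k j)"
    have wJ: "w \<in> cspace J" unfolding w_def by (rule cspace_add[OF su kJ])
    have "Q' w" using Z'(3) wJ k w_def by blast
    moreover have "T w = u"
    proof -
      have "T (\<lambda>j. w j - k j) = (\<lambda>i. T w i - T k i)" by (rule Tdiff[OF wJ kJ])
      moreover have "(\<lambda>j. w j - k j) = s u" unfolding w_def by auto
      ultimately have "T (s u) = (\<lambda>i. T w i)" using Tk by simp
      then show ?thesis using Ts u by auto
    qed
    ultimately show "Q u" using Qeq[OF wJ] by simp
  qed
  ultimately show "general I Q" unfolding general_def by blast
next
  assume "general I Q"
  then obtain Z where Z: "affine_variety I Z" "Z \<noteq> cspace I" "\<forall>u\<in>cspace I - Z. Q u"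
    unfolding general_def by blast
  define Z' where "Z' = {w \<in> cspace J. T w \<in> Z}"
  have "affine_variety J Z'" unfolding Z'_def
    by (rule affine_variety_pullback[OF TJ Tp Z(1)])
  moreover have "Z' \<noteq> cspace J"
  proof -
    have "Z \<subseteq> cspace I" using affine_variety_subset[OF Z(1)] .
    with Z(2) obtain u where u: "u \<in> cspace I" "u \<notin> Z" by blast
    then have "s u \<in> cspace J" "s u \<notin> Z'" using sI Ts unfolding Z'_def by auto
    then show ?thesis by blast
  qed
  moreover have "\<forall>w\<in>cspace J - Z'. Q' w"
  proof
    fix w assume w: "w \<in> cspace J - Z'"
    then have "T w \<in> cspace I - Z" using TJ unfolding Z'_def by blast
    then show "Q' w" using Z(3) Qeq w by blast
  qed
  ultimately show "general J Q'" unfolding general_def by blast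
qed




definition phiS :: "nat \<Rightarrow> (nat \<times> nat \<Rightarrow> complex) \<Rightarrow> (nat \<times> nat \<Rightarrow> complex)" where
  "phiS m S = (\<lambda>k. if k \<in> symidx m then (if fst k = snd k then S k else 2 * S k) else 0)"

definition psiS :: "nat \<Rightarrow> (nat \<times> nat \<Rightarrow> complex) \<Rightarrow> (nat \<times> nat \<Rightarrow> complex)" where
  "psiS m u = (\<lambda>k. if k \<in> symidx m then (if fst k = snd k then u k else u k / 2) else 0)"

lemma symidx_Suc: "symidx (Suc m) = symidx m \<union> (\<lambda>i. (i, m)) ` {..m}"
  unfolding symidx_def by auto

lemma finite_symidx: "finite (symidx m)"
proof -
  have "symidx m \<subseteq> {..<m} \<times> {..<m}" unfolding symidx_def by auto
  then show ?thesis by (rule finite_subset) auto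
qed

lemma trace_sum_aux:
  fixes V S :: "nat \<times> nat \<Rightarrow> complex"
  shows "(\<Sum>i<m. \<Sum>j<m. V (min i j, max i j) * S (min i j, max i j))
       = (\<Sum>k\<in>symidx m. phiS m S k * V k)"
proof (induction m)
  case 0
  then show ?case unfolding symidx_def by simp
next
  case (Suc m)
  let ?g = "\<lambda>a b. V (a, b) * S (a, b)"
  have L: "(\<Sum>i<Suc m. \<Sum>j<Suc m. V (min i j, max i j) * S (min i j, max i j))
     = (\<Sum>i<m. \<Sum>j<m. V (min i j, max i j) * S (min i j, max i j)) + 2 * (\<Sum>i<m. ?g i m) + ?g m m"
  proof -
    have a: "(\<Sum>i<m. V (min i m, max i m) * S (min i m, max i m)) = (\<Sum>i<m. ?g i m)"
      by (rule sum.cong) auto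
    have b: "(\<Sum>j<m. V (min m j, max m j) * S (min m j, max m j)) = (\<Sum>i<m. ?g i m)"
      by (rule sum.cong) auto
    show ?thesis
      by (simp add: sum.distrib a b algebra_simps)
  qed
  have disj: "symidx m \<inter> (\<lambda>i. (i, m)) ` {..m} = {}" unfolding symidx_def by auto
  have R: "(\<Sum>k\<in>symidx (Suc m). phiS (Suc m) S k * V k)
      = (\<Sum>k\<in>symidx m. phiS (Suc m) S k * V k) + (\<Sum>k\<in>(\<lambda>i. (i, m)) ` {..m}. phiS (Suc m) S k * V k)"
    unfolding symidx_Suc by (rule sum.union_disjoint) (auto simp: finite_symidx disj)
  have R1: "(\<Sum>k\<in>symidx m. phiS (Suc m) S k * V k) = (\<Sum>k\<in>symidx m. phiS m S k * V k)"
    by (rule sum.cong) (auto simp: phiS_def symidx_def)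
  have R2: "(\<Sum>k\<in>(\<lambda>i. (i, m)) ` {..m}. phiS (Suc m) S k * V k) = (\<Sum>i\<le>m. phiS (Suc m) S (i,m) * V (i,m))"
    by (subst sum.reindex) (auto simp: inj_on_def)
  also have "\<dots> = (\<Sum>i<m. phiS (Suc m) S (i,m) * V (i,m)) + phiS (Suc m) S (m,m) * V (m,m)"
    by (simp add: lessThan_Suc_atMost[symmetric])
  also have "\<dots> = 2 * (\<Sum>i<m. ?g i m) + ?g m m"
  proof -
    have "(\<Sum>i<m. phiS (Suc m) S (i,m) * V (i,m)) = (\<Sum>i<m. 2 * ?g i m)"
      by (rule sum.cong) (auto simp: phiS_def symidx_def)
    moreover have "phiS (Suc m) S (m,m) * V (m,m) = ?g m m" by (simp add: phiS_def symidx_def)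
    ultimately show ?thesis by (simp add: sum_distrib_left)
  qed
  finally show ?case using L R R1 Suc by simp
qed

lemma trace_sum:
  fixes V S :: "nat \<times> nat \<Rightarrow> complex"
  shows "(\<Sum>i<m. \<Sum>j<m. symmat m V $$ (i,j) * symmat m S $$ (j,i))
       = (\<Sum>k\<in>symidx m. phiS m S k * V k)"
proof -
  have "(\<Sum>i<m. \<Sum>j<m. symmat m V $$ (i,j) * symmat m S $$ (j,i))
     = (\<Sum>i<m. \<Sum>j<m. V (min i j, max i j) * S (min i j, max i j))"
    by (intro sum.cong refl) (auto simp: symmat_def min.commute max.commute)
  then show ?thesis using trace_sum_aux by simp
qed

lemma gauss_crit_eq: "gauss_crit m X S = ml_crit (symidx m) (detF m) X (phiS m S)"
  unfolding gauss_crit_def ml_crit_def trace_sum by simp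

lemma part_a: "MLD (symidx m) (detF m) X = gaussian_MLD m X"
proof -
  let ?I = "symidx m"
  have "general ?I (\<lambda>S. finite (gauss_crit m X S) \<and> card (gauss_crit m X S) = N)
      = general ?I (\<lambda>u. finite (ml_crit ?I (detF m) X u) \<and> card (ml_crit ?I (detF m) X u) = N)" for N
  proof (rule general_transfer[where T = "phiS m" and s = "psiS m"])
    fix w :: "nat \<times> nat \<Rightarrow> complex"
    show "phiS m w \<in> cspace ?I" unfolding phiS_def cspace_def by auto
  next
    fix u :: "nat \<times> nat \<Rightarrow> complex"
    show "psiS m u \<in> cspace ?I" unfolding psiS_def cspace_def by auto
  next
    fix u :: "nat \<times> nat \<Rightarrow> complex" assume "u \<in> cspace ?I"
    then show "phiS m (psiS m u) = u" unfolding phiS_def psiS_def cspace_def by auto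
  next
    fix w1 w2 :: "nat \<times> nat \<Rightarrow> complex"
    show "phiS m (\<lambda>k. w1 k - w2 k) = (\<lambda>i. phiS m w1 i - phiS m w2 i)"
      unfolding phiS_def by (auto simp: algebra_simps)
  next
    fix i assume i: "i \<in> ?I"
    show "(\<lambda>w. phiS m w i) \<in> polyfun ?I"
    proof (cases "fst i = snd i")
      case True
      then show ?thesis using i polyfun.coord[OF i] unfolding phiS_def by simp
    next
      case False
      then show ?thesis using i polyfun_cmult[OF polyfun.coord[OF i], of 2] unfolding phiS_def by simp
    qed
  next
    fix k0 :: "nat \<times> nat \<Rightarrow> complex" and k assume k: "k \<in> ?I"
    have c: "(\<lambda>u. u k) \<in> polyfun ?I" by (rule polyfun.coord[OF k])
    show "(\<lambda>u. psiS m u k + k0 k) \<in> polyfun ?I"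
    proof (cases "fst k = snd k")
      case True
      then show ?thesis using k polyfun.add[OF c polyfun.const] unfolding psiS_def by simp
    next
      case False
      have "(\<lambda>u. (1/2) * u k + k0 k) \<in> polyfun ?I"
        by (rule polyfun.add[OF polyfun_cmult[OF c] polyfun.const])
      then show ?thesis using k False unfolding psiS_def by simp
    qed
  next
    fix w :: "nat \<times> nat \<Rightarrow> complex"
    show "(finite (gauss_crit m X w) \<and> card (gauss_crit m X w) = N) =
          (finite (ml_crit ?I (detF m) X (phiS m w)) \<and> card (ml_crit ?I (detF m) X (phiS m w)) = N)"
      by (simp add: gauss_crit_eq)
  qed
  then show ?thesis unfolding MLD_def gaussian_MLD_def by simp
qed




lemma deriv_affine_line: "deriv (\<lambda>t::complex. a + t * d) 0 = d"
proof -
  have "((\<lambda>t::complex. a + t * d) has_field_derivative d) (at 0)"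
    by (auto intro!: derivative_eq_intros)
  then show ?thesis by (rule DERIV_imp_deriv)
qed

lemma polyfun_line_differentiable:
  assumes "f \<in> polyfun I"
  shows "(\<lambda>t. f (\<lambda>i. p i + t * v i)) field_differentiable (at t0)"
  using assms
proof (induction rule: polyfun.induct)
  case (const c)
  then show ?case by simp
next
  case (coord i)
  show ?case by (auto intro!: derivative_intros)
next
  case (add f g)
  then show ?case using field_differentiable_add by blast
next
  case (mult f g)
  then show ?case using field_differentiable_mult by blast
qed

locale embed =
  fixes I :: "'i set" and J :: "'j set" and A :: "('i \<Rightarrow> complex) \<Rightarrow> ('j \<Rightarrow> complex)"
    and b :: "'j \<Rightarrow> complex" and M :: "'j \<Rightarrow> 'i \<Rightarrow> complex" and pos :: "'i \<Rightarrow> 'j"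
  assumes finI: "finite I" and finJ: "finite J"
    and A_eq: "\<And>x. A x = (\<lambda>k. b k + (\<Sum>i\<in>I. M k i * x i))"
    and A_cs: "\<And>x. x \<in> cspace I \<Longrightarrow> A x \<in> cspace J"
    and pos_J: "\<And>i. i \<in> I \<Longrightarrow> pos i \<in> J"
    and A_pos: "\<And>x i. i \<in> I \<Longrightarrow> A x (pos i) = x i"
begin

definition L :: "('j \<Rightarrow> complex) \<Rightarrow> ('i \<Rightarrow> complex)" where
  "L y = (\<lambda>i. if i \<in> I then y (pos i) else 0)"

definition Alin :: "('i \<Rightarrow> complex) \<Rightarrow> ('j \<Rightarrow> complex)" where
  "Alin v = (\<lambda>k. \<Sum>i\<in>I. M k i * v i)"

definition pre :: "('j \<Rightarrow> complex) set \<Rightarrow> ('i \<Rightarrow> complex) set" where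
  "pre Z = {x \<in> cspace I. A x \<in> Z}"

lemma L_cs: "L y \<in> cspace I" unfolding L_def cspace_def by auto

lemma LA: "x \<in> cspace I \<Longrightarrow> L (A x) = x"
  unfolding L_def cspace_def using A_pos by auto

lemma inj_A: "inj_on A (cspace I)"
  by (metis LA inj_onI)

lemma A_zero_b: "A (\<lambda>i. 0) = b"
  unfolding A_eq by simp

lemma b_out: "k \<notin> J \<Longrightarrow> b k = 0"
proof -
  assume k: "k \<notin> J"
  have "(\<lambda>i. 0) \<in> cspace I" unfolding cspace_def by simp
  then have "A (\<lambda>i. 0) \<in> cspace J" by (rule A_cs)
  then show ?thesis using k A_zero_b unfolding cspace_def by auto
qed

lemma Alin_eq: "Alin v = (\<lambda>k. A v k - A (\<lambda>i. 0) k)"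
  unfolding Alin_def A_eq by simp

lemma Alin_cs: "v \<in> cspace I \<Longrightarrow> Alin v \<in> cspace J"
proof -
  assume v: "v \<in> cspace I"
  have "(\<lambda>i. 0) \<in> cspace I" unfolding cspace_def by simp
  then show ?thesis unfolding Alin_eq by (rule cspace_diff[OF A_cs[OF v] A_cs])
qed

lemma M_pos: "i \<in> I \<Longrightarrow> i' \<in> I \<Longrightarrow> M (pos i) i' = (if i' = i then 1 else 0)"
proof -
  assume i: "i \<in> I" and i': "i' \<in> I"
  have b0: "b (pos i) = 0" using A_pos[OF i, of "\<lambda>i. 0"] A_zero_b by simp
  have "A (\<lambda>j. if j = i' then 1 else 0) (pos i) = (if i' = i then 1 else 0)"
    using A_pos[OF i] by simp
  moreover have "A (\<lambda>j. if j = i' then 1 else 0) (pos i) = b (pos i) + M (pos i) i'"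
    unfolding A_eq using i' finI by (simp add: if_distrib sum.delta' cong: if_cong)
  ultimately show ?thesis using b0 by simp
qed

lemma A_line: "A (\<lambda>i. p i + t * v i) = (\<lambda>k. A p k + t * Alin v k)"
  unfolding A_eq Alin_def by (auto simp: algebra_simps sum.distrib sum_distrib_left)

lemma dirderiv_A: "dirderiv g (A p) (Alin v) = dirderiv (\<lambda>x. g (A x)) p v"
  unfolding dirderiv_def A_line by simp

lemma A_coord_poly: "k \<in> J \<Longrightarrow> (\<lambda>x. A x k) \<in> polyfun I"
proof -
  have "(\<lambda>x. b k + (\<Sum>i\<in>I. M k i * x i)) \<in> polyfun I"
    by (intro polyfun.add polyfun.const polyfun_sum finI polyfun_cmult polyfun.coord)
  then show ?thesis unfolding A_eq by simp
qed

lemma L_coord_poly: "i \<in> I \<Longrightarrow> (\<lambda>y. L y i) \<in> polyfun J"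
  unfolding L_def using polyfun.coord[OF pos_J] by simp

definition eqs :: "(('j \<Rightarrow> complex) \<Rightarrow> complex) set" where
  "eqs = (\<lambda>k y. y k - b k - (\<Sum>i\<in>I. M k i * y (pos i))) ` J"

lemma eqs_poly: "eqs \<subseteq> polyfun J"
proof
  fix e assume "e \<in> eqs"
  then obtain k where k: "k \<in> J" "e = (\<lambda>y. y k - b k - (\<Sum>i\<in>I. M k i * y (pos i)))"
    unfolding eqs_def by blast
  have "(\<lambda>y. y k - b k - (\<Sum>i\<in>I. M k i * y (pos i))) \<in> polyfun J"
    by (intro polyfun_diff polyfun.coord k polyfun.const polyfun_sum finI polyfun_cmult pos_J)
  then show "e \<in> polyfun J" using k by simp
qed

lemma eqs_A: "e \<in> eqs \<Longrightarrow> e (A x) = 0"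
proof -
  assume "e \<in> eqs"
  then obtain k where k: "e = (\<lambda>y. y k - b k - (\<Sum>i\<in>I. M k i * y (pos i)))"
    unfolding eqs_def by blast
  have "(\<Sum>i\<in>I. M k i * A x (pos i)) = (\<Sum>i\<in>I. M k i * x i)"
    by (rule sum.cong) (simp_all add: A_pos)
  moreover have "A x k = b k + (\<Sum>i\<in>I. M k i * x i)" by (simp add: A_eq)
  ultimately show ?thesis using k by simp
qed

lemma image_char:
  assumes y: "y \<in> cspace J" and e: "\<forall>e\<in>eqs. e y = 0"
  shows "A (L y) = y"
proof
  fix k
  show "A (L y) k = y k"
  proof (cases "k \<in> J")
    case True
    have "(\<lambda>y. y k - b k - (\<Sum>i\<in>I. M k i * y (pos i))) \<in> eqs" unfolding eqs_def using True by blast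
    then have "(\<lambda>y. y k - b k - (\<Sum>i\<in>I. M k i * y (pos i))) y = 0" using e by (rule bspec[rotated])
    then have "y k = b k + (\<Sum>i\<in>I. M k i * y (pos i))" by (simp add: algebra_simps)
    also have "\<dots> = A (L y) k" unfolding A_eq L_def by (auto intro!: sum.cong)
    finally show ?thesis by simp
  next
    case False
    have "A (L y) \<in> cspace J" by (rule A_cs[OF L_cs])
    then show ?thesis using False y unfolding cspace_def by auto
  qed
qed

lemma closed_image:
  assumes Z: "affine_variety I Z"
  shows "affine_variety J (A ` Z)"
proof -
  from Z obtain P where P: "P \<subseteq> polyfun I" "Z = zero_set I P" unfolding affine_variety_def by blast
  define P' where "P' = eqs \<union> (\<lambda>f y. f (L y)) ` P"
  have "(\<lambda>y. f (L y)) \<in> polyfun J" if f: "f \<in> P" for f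
  proof -
    have "f \<in> polyfun I" using f P(1) by blast
    then show ?thesis using polyfun_pullback[of f I L J] L_coord_poly by blast
  qed
  then have P'p: "P' \<subseteq> polyfun J"
    unfolding P'_def using eqs_poly by blast
  have "A ` Z = zero_set J P'"
  proof (rule Set.set_eqI, rule iffI)
    fix y assume "y \<in> A ` Z"
    then obtain x where x: "x \<in> Z" "y = A x" by blast
    have xc: "x \<in> cspace I" using x(1) P(2) zero_set_subset by blast
    have fx: "\<forall>f\<in>P. f x = 0" using x(1) P(2) unfolding zero_set_def by blast
    have yc: "y \<in> cspace J" using A_cs[OF xc] x(2) by simp
    have "\<forall>g\<in>P'. g y = 0"
    proof
      fix g assume "g \<in> P'"
      then consider "g \<in> eqs" | f where "f \<in> P" "g = (\<lambda>y. f (L y))" unfolding P'_def by blast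
      then show "g y = 0"
      proof cases
        case 1
        then show ?thesis using eqs_A x(2) by simp
      next
        case 2
        then show ?thesis using fx LA[OF xc] x(2) by simp
      qed
    qed
    then show "y \<in> zero_set J P'" unfolding zero_set_def using yc by blast
  next
    fix y assume y: "y \<in> zero_set J P'"
    then have yc: "y \<in> cspace J" and all: "\<forall>g\<in>P'. g y = 0"
      unfolding zero_set_def by blast+
    have e: "\<forall>e\<in>eqs. e y = 0" using all unfolding P'_def by blast
    have f: "\<forall>f\<in>P. f (L y) = 0"
    proof
      fix f assume "f \<in> P"
      then have "(\<lambda>y. f (L y)) \<in> P'" unfolding P'_def by blast
      then show "f (L y) = 0" using all by fastforce
    qed
    have "L y \<in> zero_set I P" using f L_cs unfolding zero_set_def by blast
    then have "L y \<in> Z" using P(2) by simp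
    moreover have "A (L y) = y" by (rule image_char[OF yc e])
    ultimately show "y \<in> A ` Z" by (metis image_eqI)
  qed
  then show ?thesis using P'p unfolding affine_variety_def by blast
qed

lemma closed_pre: "affine_variety J Z \<Longrightarrow> affine_variety I (pre Z)"
  unfolding pre_def by (rule affine_variety_pullback[OF A_cs A_coord_poly])

lemma A_pre: "Z \<subseteq> A ` cspace I \<Longrightarrow> A ` pre Z = Z"
  unfolding pre_def by auto

lemma pre_A: "Z \<subseteq> cspace I \<Longrightarrow> pre (A ` Z) = Z"
  unfolding pre_def using inj_A by (auto simp: inj_on_def)

lemma pre_sub: "Z \<subseteq> cspace I \<Longrightarrow> Y \<subseteq> A ` Z \<Longrightarrow> pre Y \<subseteq> Z"
proof
  fix x assume Z: "Z \<subseteq> cspace I" and Y: "Y \<subseteq> A ` Z" and x: "x \<in> pre Y"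
  then have xc: "x \<in> cspace I" and "A x \<in> A ` Z" unfolding pre_def by auto
  then obtain z where z: "z \<in> Z" "A x = A z" by blast
  then have "x = z" using inj_A xc Z unfolding inj_on_def by blast
  then show "x \<in> Z" using z by simp
qed

lemma irr_image:
  assumes Y: "irreducible_variety I Y"
  shows "irreducible_variety J (A ` Y)"
proof -
  have Ya: "affine_variety I Y" and Yne: "Y \<noteq> {}" using Y unfolding irreducible_variety_def by auto
  have Yc: "Y \<subseteq> cspace I" by (rule affine_variety_subset[OF Ya])
  show ?thesis unfolding irreducible_variety_def
  proof (intro conjI allI impI)
    show "affine_variety J (A ` Y)" by (rule closed_image[OF Ya])
    show "A ` Y \<noteq> {}" using Yne by simp
    fix Z1 Z2 assume H: "affine_variety J Z1 \<and> affine_variety J Z2 \<and> A ` Y \<subseteq> Z1 \<union> Z2"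
    have "Y \<subseteq> pre Z1 \<union> pre Z2" using H Yc unfolding pre_def by auto
    moreover have irrY: "\<And>Z1 Z2. affine_variety I Z1 \<Longrightarrow> affine_variety I Z2 \<Longrightarrow> Y \<subseteq> Z1 \<union> Z2 \<Longrightarrow> Y \<subseteq> Z1 \<or> Y \<subseteq> Z2"
      using Y unfolding irreducible_variety_def by blast
    moreover have "affine_variety I (pre Z1)" "affine_variety I (pre Z2)" using H closed_pre by blast+
    ultimately have "Y \<subseteq> pre Z1 \<or> Y \<subseteq> pre Z2" by blast
    then show "A ` Y \<subseteq> Z1 \<or> A ` Y \<subseteq> Z2" unfolding pre_def by auto
  qed
qed

lemma irr_pre:
  assumes Y: "irreducible_variety J Y" and YA: "Y \<subseteq> A ` cspace I"
  shows "irreducible_variety I (pre Y)"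
proof -
  have Ya: "affine_variety J Y" and Yne: "Y \<noteq> {}" using Y unfolding irreducible_variety_def by auto
  show ?thesis unfolding irreducible_variety_def
  proof (intro conjI allI impI)
    show "affine_variety I (pre Y)" by (rule closed_pre[OF Ya])
    show "pre Y \<noteq> {}" using Yne A_pre[OF YA] by auto
    fix Z1 Z2 assume H: "affine_variety I Z1 \<and> affine_variety I Z2 \<and> pre Y \<subseteq> Z1 \<union> Z2"
    have YY: "Y = A ` pre Y" using A_pre[OF YA] by simp
    have "Y \<subseteq> A ` Z1 \<union> A ` Z2" using H by (subst YY) blast
    moreover have irrY: "\<And>Z1 Z2. affine_variety J Z1 \<Longrightarrow> affine_variety J Z2 \<Longrightarrow> Y \<subseteq> Z1 \<union> Z2 \<Longrightarrow> Y \<subseteq> Z1 \<or> Y \<subseteq> Z2"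
      using Y unfolding irreducible_variety_def by blast
    moreover have "affine_variety J (A ` Z1)" "affine_variety J (A ` Z2)" using H closed_image by blast+
    ultimately have "Y \<subseteq> A ` Z1 \<or> Y \<subseteq> A ` Z2" by blast
    moreover have "Z1 \<subseteq> cspace I" "Z2 \<subseteq> cspace I" using H affine_variety_subset by blast+
    ultimately show "pre Y \<subseteq> Z1 \<or> pre Y \<subseteq> Z2" using pre_sub by blast
  qed
qed

lemma var_dim_image:
  assumes Xc: "X \<subseteq> cspace I"
  shows "var_dim J (A ` X) = var_dim I X"
proof -
  have "{n. \<exists>Z :: nat \<Rightarrow> ('j \<Rightarrow> complex) set.
      (\<forall>k\<le>n. irreducible_variety J (Z k) \<and> Z k \<subseteq> A ` X) \<and> (\<forall>k<n. Z k \<subset> Z (Suc k))}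
    = {n. \<exists>Z :: nat \<Rightarrow> ('i \<Rightarrow> complex) set.
      (\<forall>k\<le>n. irreducible_variety I (Z k) \<and> Z k \<subseteq> X) \<and> (\<forall>k<n. Z k \<subset> Z (Suc k))}"
  proof (rule Set.set_eqI, rule iffI)
    fix n assume "n \<in> {n. \<exists>Z :: nat \<Rightarrow> ('j \<Rightarrow> complex) set.
      (\<forall>k\<le>n. irreducible_variety J (Z k) \<and> Z k \<subseteq> A ` X) \<and> (\<forall>k<n. Z k \<subset> Z (Suc k))}"
    then obtain Z :: "nat \<Rightarrow> ('j \<Rightarrow> complex) set" where
      Z: "\<forall>k\<le>n. irreducible_variety J (Z k) \<and> Z k \<subseteq> A ` X" "\<forall>k<n. Z k \<subset> Z (Suc k)" by blast
    define W where "W k = pre (Z k)" for k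
    have "\<forall>k\<le>n. irreducible_variety I (W k) \<and> W k \<subseteq> X"
    proof (intro allI impI conjI)
      fix k assume k: "k \<le> n"
      have ZA: "Z k \<subseteq> A ` cspace I" using Z(1) k Xc by blast
      show "irreducible_variety I (W k)" unfolding W_def using irr_pre[OF _ ZA] Z(1) k by blast
      show "W k \<subseteq> X" unfolding W_def using pre_sub[OF Xc] Z(1) k by blast
    qed
    moreover have "\<forall>k<n. W k \<subset> W (Suc k)"
    proof (intro allI impI)
      fix k assume k: "k < n"
      have "Z k \<subseteq> A ` X" "Z (Suc k) \<subseteq> A ` X" using Z(1) k by auto
      then have ZA: "Z k \<subseteq> A ` cspace I" "Z (Suc k) \<subseteq> A ` cspace I" using Xc by blast+
      have ss: "Z k \<subset> Z (Suc k)" using Z(2) k by blast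
      have "W k \<subseteq> W (Suc k)" unfolding W_def pre_def using ss by blast
      moreover have "W k \<noteq> W (Suc k)"
      proof
        assume "W k = W (Suc k)"
        then have "A ` W k = A ` W (Suc k)" by simp
        then have "Z k = Z (Suc k)" unfolding W_def A_pre[OF ZA(1)] A_pre[OF ZA(2)] .
        then show False using ss by blast
      qed
      ultimately show "W k \<subset> W (Suc k)" by blast
    qed
    ultimately have "(\<forall>k\<le>n. irreducible_variety I (W k) \<and> W k \<subseteq> X) \<and> (\<forall>k<n. W k \<subset> W (Suc k))"
      by (rule conjI)
    then show "n \<in> {n. \<exists>Z :: nat \<Rightarrow> ('i \<Rightarrow> complex) set.
      (\<forall>k\<le>n. irreducible_variety I (Z k) \<and> Z k \<subseteq> X) \<and> (\<forall>k<n. Z k \<subset> Z (Suc k))}"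
      unfolding mem_Collect_eq by (rule exI[of _ W])
  next
    fix n assume "n \<in> {n. \<exists>Z :: nat \<Rightarrow> ('i \<Rightarrow> complex) set.
      (\<forall>k\<le>n. irreducible_variety I (Z k) \<and> Z k \<subseteq> X) \<and> (\<forall>k<n. Z k \<subset> Z (Suc k))}"
    then obtain Z :: "nat \<Rightarrow> ('i \<Rightarrow> complex) set" where
      Z: "\<forall>k\<le>n. irreducible_variety I (Z k) \<and> Z k \<subseteq> X" "\<forall>k<n. Z k \<subset> Z (Suc k)" by blast
    define W where "W k = A ` (Z k)" for k
    have "\<forall>k\<le>n. irreducible_variety J (W k) \<and> W k \<subseteq> A ` X"
      unfolding W_def using Z(1) irr_image by blast
    moreover have "\<forall>k<n. W k \<subset> W (Suc k)"
    proof (intro allI impI)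
      fix k assume k: "k < n"
      have "Z (Suc k) \<subseteq> X" using Z(1) k by simp
      then have "Z (Suc k) \<subseteq> cspace I" using Xc by blast
      have ss: "Z k \<subset> Z (Suc k)" using Z(2) k by blast
      then have Zc: "Z k \<subseteq> cspace I" using \<open>Z (Suc k) \<subseteq> cspace I\<close> by blast
      have "W k \<subseteq> W (Suc k)" unfolding W_def using ss by blast
      moreover have "W k \<noteq> W (Suc k)"
      proof
        assume "W k = W (Suc k)"
        then have "pre (W k) = pre (W (Suc k))" by simp
        then have "Z k = Z (Suc k)" unfolding W_def pre_A[OF Zc] pre_A[OF \<open>Z (Suc k) \<subseteq> cspace I\<close>] .
        then show False using ss by blast
      qed
      ultimately show "W k \<subset> W (Suc k)" by blast
    qed
    ultimately have "(\<forall>k\<le>n. irreducible_variety J (W k) \<and> W k \<subseteq> A ` X) \<and> (\<forall>k<n. W k \<subset> W (Suc k))"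
      by (rule conjI)
    then show "n \<in> {n. \<exists>Z :: nat \<Rightarrow> ('j \<Rightarrow> complex) set.
      (\<forall>k\<le>n. irreducible_variety J (Z k) \<and> Z k \<subseteq> A ` X) \<and> (\<forall>k<n. Z k \<subset> Z (Suc k))}"
      unfolding mem_Collect_eq by (rule exI[of _ W])
  qed
  then show ?thesis unfolding var_dim_def by simp
qed

end




lemma deriv_sq:
  assumes "g field_differentiable (at 0)"
  shows "deriv (\<lambda>t. c * (g t)^2) 0 = c * (2 * g 0 * deriv g 0)"
proof -
  have g: "(g has_field_derivative deriv g 0) (at 0)" using assms by (rule field_differentiable_derivI)
  have "((\<lambda>t. c * (g t)^2) has_field_derivative c * (of_nat 2 * (deriv g 0 * g 0 ^ (2 - Suc 0)))) (at 0)"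
    by (intro DERIV_cmult DERIV_power g)
  then show ?thesis by (auto dest!: DERIV_imp_deriv)
qed

context embed
begin

lemma Alin_lin: "Alin (\<lambda>i. \<Sum>v\<in>S. c v * v i) = (\<lambda>k. \<Sum>v\<in>S. c v * Alin v k)"
  unfolding Alin_def by (auto simp: sum_distrib_left intro: sum.swap[THEN trans] intro!: ext sum.cong)

lemma L_lin: "L (\<lambda>k. \<Sum>v\<in>S. c v * v k) = (\<lambda>i. \<Sum>v\<in>S. c v * L v i)"
  unfolding L_def by auto

lemma L_Alin: "v \<in> cspace I \<Longrightarrow> L (Alin v) = v"
proof
  fix i assume v: "v \<in> cspace I"
  show "L (Alin v) i = v i"
  proof (cases "i \<in> I")
    case True
    have "L (Alin v) i = (\<Sum>i'\<in>I. M (pos i) i' * v i')" unfolding L_def Alin_def using True by simp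
    also have "\<dots> = (\<Sum>i'\<in>I. (if i' = i then v i' else 0))"
      by (rule sum.cong) (auto simp: M_pos True)
    also have "\<dots> = v i" using True finI by (simp add: sum.delta')
    finally show ?thesis .
  next
    case False
    then show ?thesis using v unfolding L_def cspace_def by auto
  qed
qed

lemma inj_Alin: "inj_on Alin (cspace I)"
  by (metis L_Alin inj_onI)

lemma cindep_image:
  assumes S: "S \<subseteq> cspace I"
  shows "cindep (Alin ` S) = cindep S"
proof
  have injS: "inj_on Alin S" using inj_Alin S inj_on_subset by blast
  assume H: "cindep (Alin ` S)"
  then have fin: "finite S" unfolding cindep_def using finite_imageD[OF _ injS] by blast
  show "cindep S" unfolding cindep_def
  proof (intro conjI fin allI impI ballI)
    fix c v assume z: "\<forall>i. (\<Sum>v\<in>S. c v * v i) = 0" and v: "v \<in> S"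
    define c' where "c' w = c (L w)" for w
    have "(\<Sum>w\<in>Alin ` S. c' w * w k) = 0" for k
    proof -
      have "(\<Sum>w\<in>Alin ` S. c' w * w k) = (\<Sum>v\<in>S. c' (Alin v) * Alin v k)"
        by (rule sum.reindex[OF injS, unfolded comp_def])
      also have "\<dots> = (\<Sum>v\<in>S. c v * Alin v k)"
        by (rule sum.cong) (use S L_Alin c'_def in auto)
      also have "\<dots> = Alin (\<lambda>i. \<Sum>v\<in>S. c v * v i) k" by (simp add: Alin_lin)
      also have "\<dots> = 0" using z unfolding Alin_def by simp
      finally show ?thesis .
    qed
    then have "c' (Alin v) = 0" using H v unfolding cindep_def by blast
    then show "c v = 0" using L_Alin S v c'_def by auto
  qed
next
  assume H: "cindep S"
  then have fin: "finite S" unfolding cindep_def by blast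
  have injS: "inj_on Alin S" using inj_Alin S inj_on_subset by blast
  show "cindep (Alin ` S)" unfolding cindep_def
  proof (intro conjI allI impI ballI)
    show "finite (Alin ` S)" using fin by simp
    fix c w assume z: "\<forall>k. (\<Sum>w\<in>Alin ` S. c w * w k) = 0" and w: "w \<in> Alin ` S"
    have "(\<Sum>v\<in>S. c (Alin v) * v i) = 0" for i
    proof -
      have "(\<Sum>v\<in>S. c (Alin v) * v i) = (\<Sum>v\<in>S. c (Alin v) * L (Alin v) i)"
        by (rule sum.cong) (use S L_Alin in auto)
      also have "\<dots> = L (\<lambda>k. \<Sum>v\<in>S. c (Alin v) * Alin v k) i" unfolding L_def by (cases "i \<in> I") auto
      also have "(\<lambda>k. \<Sum>v\<in>S. c (Alin v) * Alin v k) = (\<lambda>k. \<Sum>w\<in>Alin ` S. c w * w k)"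
        by (rule ext, rule sum.reindex[OF injS, unfolded comp_def, symmetric])
      also have "\<dots> = (\<lambda>k. 0)" using z by simp
      finally show ?thesis unfolding L_def by simp
    qed
    then have zz: "\<forall>i. (\<Sum>v\<in>S. (\<lambda>v. c (Alin v)) v * v i) = 0" by simp
    have H2: "\<And>c. (\<forall>i. (\<Sum>v\<in>S. c v * v i) = 0) \<Longrightarrow> \<forall>v\<in>S. c v = 0"
      using H unfolding cindep_def by blast
    have "\<forall>v\<in>S. c (Alin v) = 0" using H2[OF zz] by simp
    then show "c w = 0" using w by blast
  qed
qed

lemma cdim_image:
  assumes T: "T \<subseteq> cspace I"
  shows "cdim (Alin ` T) = cdim T"
proof -
  have "{card S | S. S \<subseteq> Alin ` T \<and> cindep S} = {card S | S. S \<subseteq> T \<and> cindep S}"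
  proof (rule Set.set_eqI, rule iffI)
    fix n assume "n \<in> {card S | S. S \<subseteq> Alin ` T \<and> cindep S}"
    then obtain S where S: "n = card S" "S \<subseteq> Alin ` T" "cindep S" by blast
    define S0 where "S0 = L ` S"
    have AL: "Alin (L x) = x \<and> L x \<in> T" if x: "x \<in> S" for x
    proof -
      obtain t where t: "t \<in> T" "x = Alin t" using S(2) x by blast
      then have "L x = t" using L_Alin T by blast
      then show ?thesis using t by simp
    qed
    have S0T: "S0 \<subseteq> T" unfolding S0_def using AL by blast
    have "Alin ` S0 = (\<lambda>x. Alin (L x)) ` S" unfolding S0_def by (simp add: image_image)
    also have "\<dots> = S" using AL by simp
    finally have SS0: "S = Alin ` S0" by simp
    have "inj_on Alin S0" using inj_Alin S0T T inj_on_subset by blast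
    then have "card S0 = n" using S(1) SS0 card_image by metis
    moreover have "cindep S0" using cindep_image[of S0] S0T T S(3) SS0 by auto
    ultimately show "n \<in> {card S | S. S \<subseteq> T \<and> cindep S}" using S0T by blast
  next
    fix n assume "n \<in> {card S | S. S \<subseteq> T \<and> cindep S}"
    then obtain S where S: "n = card S" "S \<subseteq> T" "cindep S" by blast
    have "inj_on Alin S" using inj_Alin S(2) T inj_on_subset by blast
    then have "card (Alin ` S) = n" using S(1) card_image by metis
    moreover have "cindep (Alin ` S)" using cindep_image[of S] S(2,3) T by auto
    moreover have "Alin ` S \<subseteq> Alin ` T" using S(2) by blast
    ultimately show "n \<in> {card S | S. S \<subseteq> Alin ` T \<and> cindep S}" by blast
  qed
  then show ?thesis unfolding cdim_def by simp
qed

lemma dirderiv_eqs: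
  "k \<in> J \<Longrightarrow> dirderiv (\<lambda>y. y k - b k - (\<Sum>i\<in>I. M k i * y (pos i))) q w = w k - (\<Sum>i\<in>I. M k i * w (pos i))"
proof -
  have "(\<lambda>t. (\<lambda>y. y k - b k - (\<Sum>i\<in>I. M k i * y (pos i))) (\<lambda>j. q j + t * w j))
    = (\<lambda>t. (q k - b k - (\<Sum>i\<in>I. M k i * q (pos i))) + t * (w k - (\<Sum>i\<in>I. M k i * w (pos i))))"
    by (auto simp: algebra_simps sum.distrib sum_distrib_left)
  then show ?thesis unfolding dirderiv_def by (simp add: deriv_affine_line)
qed

lemma tangent_image:
  assumes Xc: "X \<subseteq> cspace I" and p: "p \<in> cspace I"
  shows "tangent_space J (A ` X) (A p) = Alin ` tangent_space I X p"
proof (rule Set.set_eqI, rule iffI)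
  fix w assume w: "w \<in> tangent_space J (A ` X) (A p)"
  then have wc: "w \<in> cspace J" and wd: "\<And>g. g \<in> vanishing_ideal J (A ` X) \<Longrightarrow> dirderiv g (A p) w = 0"
    unfolding tangent_space_def by blast+
  define v where "v = L w"
  have vc: "v \<in> cspace I" unfolding v_def by (rule L_cs)
  have wv: "w = Alin v"
  proof
    fix k show "w k = Alin v k"
    proof (cases "k \<in> J")
      case True
      define e where "e = (\<lambda>y. y k - b k - (\<Sum>i\<in>I. M k i * y (pos i)))"
      have "e \<in> eqs" unfolding eqs_def e_def using True by blast
      then have "e \<in> vanishing_ideal J (A ` X)" unfolding vanishing_ideal_def
        using eqs_poly eqs_A by blast
      then have "dirderiv e (A p) w = 0" by (rule wd)
      then have "w k = (\<Sum>i\<in>I. M k i * w (pos i))" unfolding e_def dirderiv_eqs[OF True] by simp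
      also have "\<dots> = Alin v k" unfolding Alin_def v_def L_def by (rule sum.cong) auto
      finally show ?thesis .
    next
      case False
      then show ?thesis using wc Alin_cs[OF vc] unfolding cspace_def by auto
    qed
  qed
  have "v \<in> tangent_space I X p" unfolding tangent_space_def
  proof (intro CollectI conjI ballI vc)
    fix f assume f: "f \<in> vanishing_ideal I X"
    have "(\<lambda>y. f (L y)) \<in> vanishing_ideal J (A ` X)"
      unfolding vanishing_ideal_def
    proof (intro CollectI conjI ballI)
      show "(\<lambda>y. f (L y)) \<in> polyfun J"
        using polyfun_pullback[of f I L J] L_coord_poly f unfolding vanishing_ideal_def by blast
      fix y assume "y \<in> A ` X"
      then obtain x where "x \<in> X" "y = A x" by blast
      then show "f (L y) = 0" using LA Xc f unfolding vanishing_ideal_def by auto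
    qed
    then have "dirderiv (\<lambda>y. f (L y)) (A p) w = 0" by (rule wd)
    then have "dirderiv (\<lambda>x. f (L (A x))) p v = 0" unfolding wv dirderiv_A .
    moreover have "dirderiv (\<lambda>x. f (L (A x))) p v = dirderiv f p v"
    proof -
      have "(\<lambda>i. p i + t * v i) \<in> cspace I" for t using p vc unfolding cspace_def by auto
      then have "(\<lambda>t. f (L (A (\<lambda>i. p i + t * v i)))) = (\<lambda>t. f (\<lambda>i. p i + t * v i))"
        using LA by auto
      then show ?thesis unfolding dirderiv_def by simp
    qed
    ultimately show "dirderiv f p v = 0" by simp
  qed
  then show "w \<in> Alin ` tangent_space I X p" using wv by blast
next
  fix w assume "w \<in> Alin ` tangent_space I X p"
  then obtain v where v: "v \<in> tangent_space I X p" "w = Alin v" by blast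
  have vc: "v \<in> cspace I" and vd: "\<And>f. f \<in> vanishing_ideal I X \<Longrightarrow> dirderiv f p v = 0"
    using v(1) unfolding tangent_space_def by blast+
  show "w \<in> tangent_space J (A ` X) (A p)" unfolding tangent_space_def
  proof (intro CollectI conjI ballI)
    show "w \<in> cspace J" using v(2) Alin_cs[OF vc] by simp
    fix g assume g: "g \<in> vanishing_ideal J (A ` X)"
    have "(\<lambda>x. g (A x)) \<in> vanishing_ideal I X" unfolding vanishing_ideal_def
    proof (intro CollectI conjI ballI)
      show "(\<lambda>x. g (A x)) \<in> polyfun I"
        using polyfun_pullback[of g J A I] A_coord_poly g unfolding vanishing_ideal_def by blast
      fix x assume "x \<in> X"
      then show "g (A x) = 0" using g unfolding vanishing_ideal_def by blast
    qed
    then have "dirderiv (\<lambda>x. g (A x)) p v = 0" by (rule vd)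
    then show "dirderiv g (A p) w = 0" unfolding v(2) dirderiv_A .
  qed
qed

lemma tangent_sub: "tangent_space I X p \<subseteq> cspace I"
  unfolding tangent_space_def by blast

lemma smooth_image:
  assumes Xc: "X \<subseteq> cspace I"
  shows "smooth_locus J (A ` X) = A ` smooth_locus I X"
proof -
  have "cdim (tangent_space J (A ` X) (A p)) = cdim (tangent_space I X p)" if "p \<in> X" for p
    using tangent_image[OF Xc] that Xc cdim_image[OF tangent_sub] by auto
  then show ?thesis unfolding smooth_locus_def var_dim_image[OF Xc] by auto
qed

end

locale embed_ml = embed I J A b M pos
  for I :: "'i set" and J :: "'j set" and A b M pos +
  fixes F :: "('i \<Rightarrow> complex) \<Rightarrow> complex" and G :: "('j \<Rightarrow> complex) \<Rightarrow> complex" and c :: complex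
  assumes F_poly: "F \<in> polyfun I"
    and G_A: "\<And>x. x \<in> cspace I \<Longrightarrow> G (A x) = c * (F x)^2"
    and c_nz: "c \<noteq> 0"
begin

definition Tw :: "('j \<Rightarrow> complex) \<Rightarrow> ('i \<Rightarrow> complex)" where
  "Tw w = (\<lambda>i. if i \<in> I then (\<Sum>k\<in>J. w k * M k i) / 2 else 0)"

lemma dirderiv_G:
  assumes p: "p \<in> cspace I" and v: "v \<in> cspace I"
  shows "dirderiv G (A p) (Alin v) = c * (2 * F p * dirderiv F p v)"
proof -
  have "(\<lambda>i. p i + t * v i) \<in> cspace I" for t using p v unfolding cspace_def by auto
  then have "(\<lambda>t. G (A (\<lambda>i. p i + t * v i))) = (\<lambda>t. c * (F (\<lambda>i. p i + t * v i))^2)"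
    using G_A by auto
  then have "dirderiv G (A p) (Alin v) = deriv (\<lambda>t. c * (F (\<lambda>i. p i + t * v i))^2) 0"
    unfolding dirderiv_A by (simp add: dirderiv_def)
  also have "\<dots> = c * (2 * F (\<lambda>i. p i + 0 * v i) * deriv (\<lambda>t. F (\<lambda>i. p i + t * v i)) 0)"
    by (rule deriv_sq[OF polyfun_line_differentiable[OF F_poly]])
  finally show ?thesis unfolding dirderiv_def by simp
qed

lemma sum_Tw: "(\<Sum>k\<in>J. w k * Alin v k) = 2 * (\<Sum>i\<in>I. Tw w i * v i)"
proof -
  have "(\<Sum>k\<in>J. w k * Alin v k) = (\<Sum>k\<in>J. \<Sum>i\<in>I. w k * M k i * v i)"
    unfolding Alin_def by (simp add: sum_distrib_left ac_simps)
  also have "\<dots> = (\<Sum>i\<in>I. \<Sum>k\<in>J. w k * M k i * v i)" by (rule sum.swap)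
  also have "\<dots> = (\<Sum>i\<in>I. 2 * (Tw w i * v i))"
    unfolding Tw_def by (rule sum.cong) (auto simp: sum_distrib_right)
  finally show ?thesis by (simp add: sum_distrib_left)
qed

lemma ml_crit_image:
  assumes Xc: "X \<subseteq> cspace I"
  shows "ml_crit J G (A ` X) w = A ` ml_crit I F X (Tw w)"
proof -
  have smX: "smooth_locus I X \<subseteq> cspace I" using Xc unfolding smooth_locus_def by blast
  have key: "(G (A p) \<noteq> 0 \<and> (\<forall>v'\<in>tangent_space J (A ` X) (A p).
        dirderiv G (A p) v' / G (A p) - (\<Sum>k\<in>J. w k * v' k) = 0))
      = (F p \<noteq> 0 \<and> (\<forall>v\<in>tangent_space I X p. dirderiv F p v / F p - (\<Sum>i\<in>I. Tw w i * v i) = 0))"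
    if p: "p \<in> cspace I" for p
  proof -
    have GF: "G (A p) \<noteq> 0 \<longleftrightarrow> F p \<noteq> 0" using G_A[OF p] c_nz by simp
    have eq: "dirderiv G (A p) (Alin v) / G (A p) - (\<Sum>k\<in>J. w k * Alin v k)
        = 2 * (dirderiv F p v / F p - (\<Sum>i\<in>I. Tw w i * v i))"
      if v: "v \<in> cspace I" and Fp: "F p \<noteq> 0" for v
    proof -
      have "c * (2 * F p * dirderiv F p v) / (c * (F p)^2) = 2 * (dirderiv F p v / F p)"
        using c_nz Fp by (simp add: power2_eq_square)
      then show ?thesis unfolding dirderiv_G[OF p v] G_A[OF p] sum_Tw by (simp add: algebra_simps)
    qed
    show ?thesis
    proof (cases "F p = 0")
      case True then show ?thesis using GF by simp
    next
      case False
      have "(\<forall>v'\<in>tangent_space J (A ` X) (A p).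
          dirderiv G (A p) v' / G (A p) - (\<Sum>k\<in>J. w k * v' k) = 0)
        = (\<forall>v\<in>tangent_space I X p. dirderiv G (A p) (Alin v) / G (A p) - (\<Sum>k\<in>J. w k * Alin v k) = 0)"
        unfolding tangent_image[OF Xc p] by simp
      also have "\<dots> = (\<forall>v\<in>tangent_space I X p. dirderiv F p v / F p - (\<Sum>i\<in>I. Tw w i * v i) = 0)"
      proof (rule ball_cong[OF refl])
        fix v assume "v \<in> tangent_space I X p"
        then have "v \<in> cspace I" using tangent_sub by blast
        then have e: "dirderiv G (A p) (Alin v) / G (A p) - (\<Sum>k\<in>J. w k * Alin v k)
          = 2 * (dirderiv F p v / F p - (\<Sum>i\<in>I. Tw w i * v i))" by (rule eq[OF _ False])
        show "(dirderiv G (A p) (Alin v) / G (A p) - (\<Sum>k\<in>J. w k * Alin v k) = 0) =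
          (dirderiv F p v / F p - (\<Sum>i\<in>I. Tw w i * v i) = 0)" unfolding e
          by (metis mult_eq_0_iff zero_neq_numeral)
      qed
      finally show ?thesis using GF False by simp
    qed
  qed
  show ?thesis
  proof (rule Set.set_eqI, rule iffI)
    fix y assume y: "y \<in> ml_crit J G (A ` X) w"
    then have "y \<in> smooth_locus J (A ` X)" unfolding ml_crit_def by blast
    then obtain p where p: "p \<in> smooth_locus I X" "y = A p" unfolding smooth_image[OF Xc] by blast
    have pc: "p \<in> cspace I" using p(1) smX by blast
    have "p \<in> ml_crit I F X (Tw w)" using y key[OF pc] p unfolding ml_crit_def by auto
    then show "y \<in> A ` ml_crit I F X (Tw w)" using p(2) by blast
  next
    fix y assume "y \<in> A ` ml_crit I F X (Tw w)"
    then obtain p where p: "p \<in> ml_crit I F X (Tw w)" "y = A p" by blast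
    have ps: "p \<in> smooth_locus I X" using p(1) unfolding ml_crit_def by blast
    have pc: "p \<in> cspace I" using ps smX by blast
    have "A p \<in> smooth_locus J (A ` X)" using ps unfolding smooth_image[OF Xc] by blast
    then show "y \<in> ml_crit J G (A ` X) w" using p key[OF pc] unfolding ml_crit_def by auto
  qed
qed

definition sw :: "('i \<Rightarrow> complex) \<Rightarrow> ('j \<Rightarrow> complex)" where
  "sw u = (\<lambda>k. \<Sum>i\<in>I. if k = pos i then 2 * u i else 0)"

lemma MLD_image:
  assumes Xc: "X \<subseteq> cspace I"
  shows "MLD J G (A ` X) = MLD I F X"
proof -
  have mlc: "ml_crit I F X u \<subseteq> cspace I" for u
    using Xc unfolding ml_crit_def smooth_locus_def by blast
  have "general J (\<lambda>w. finite (ml_crit J G (A ` X) w) \<and> card (ml_crit J G (A ` X) w) = N)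
      = general I (\<lambda>u. finite (ml_crit I F X u) \<and> card (ml_crit I F X u) = N)" for N
  proof (rule general_transfer[where T = Tw and s = sw])
    fix w :: "'j \<Rightarrow> complex"
    show "Tw w \<in> cspace I" unfolding Tw_def cspace_def by auto
  next
    fix u :: "'i \<Rightarrow> complex"
    have "(\<Sum>i\<in>I. if k = pos i then 2 * u i else 0) = 0" if k: "k \<notin> J" for k
      by (rule sum.neutral) (use k pos_J in auto)
    then show "sw u \<in> cspace J" unfolding sw_def cspace_def by auto
  next
    fix u :: "'i \<Rightarrow> complex" assume u: "u \<in> cspace I"
    show "Tw (sw u) = u"
    proof
      fix i show "Tw (sw u) i = u i"
      proof (cases "i \<in> I")
        case True
        have "(\<Sum>k\<in>J. sw u k * M k i) = (\<Sum>k\<in>J. \<Sum>i'\<in>I. (if k = pos i' then 2 * u i' * M k i else 0))"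
          unfolding sw_def sum_distrib_right by (intro sum.cong refl) auto
        also have "\<dots> = (\<Sum>i'\<in>I. \<Sum>k\<in>J. (if k = pos i' then 2 * u i' * M k i else 0))" by (rule sum.swap)
        also have "\<dots> = (\<Sum>i'\<in>I. 2 * u i' * M (pos i') i)"
          by (rule sum.cong) (auto simp: sum.delta finJ pos_J)
        also have "\<dots> = (\<Sum>i'\<in>I. if i' = i then 2 * u i' else 0)"
          by (rule sum.cong) (auto simp: M_pos True)
        also have "\<dots> = 2 * u i" using True finI by (simp add: sum.delta)
        finally show ?thesis unfolding Tw_def using True by simp
      next
        case False
        then show ?thesis using u unfolding Tw_def cspace_def by auto
      qed
    qed
  next
    fix w1 w2 :: "'j \<Rightarrow> complex"
    show "Tw (\<lambda>k. w1 k - w2 k) = (\<lambda>i. Tw w1 i - Tw w2 i)"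
      unfolding Tw_def by (auto simp: algebra_simps sum_subtractf diff_divide_distrib)
  next
    fix i assume i: "i \<in> I"
    have "(\<lambda>w. (1/2) * (\<Sum>k\<in>J. w k * M k i)) \<in> polyfun J"
      by (intro polyfun_cmult polyfun_sum finJ) (auto intro: polyfun.mult polyfun.coord polyfun.const)
    then show "(\<lambda>w. Tw w i) \<in> polyfun J" unfolding Tw_def using i by simp
  next
    fix k0 :: "'j \<Rightarrow> complex" and k assume k: "k \<in> J"
    have "(\<lambda>u. (\<Sum>i\<in>I. if k = pos i then 2 * u i else 0) + k0 k) \<in> polyfun I"
    proof (intro polyfun.add polyfun_sum finI polyfun.const)
      fix i assume i: "i \<in> I"
      show "(\<lambda>x. if k = pos i then 2 * x i else 0) \<in> polyfun I"
        by (cases "k = pos i") (simp_all add: polyfun_cmult polyfun.coord[OF i] polyfun.const)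
    qed
    then show "(\<lambda>u. sw u k + k0 k) \<in> polyfun I" unfolding sw_def by simp
  next
    fix w :: "'j \<Rightarrow> complex"
    have inj: "inj_on A (ml_crit I F X (Tw w))" using inj_A mlc inj_on_subset by blast
    show "(finite (ml_crit J G (A ` X) w) \<and> card (ml_crit J G (A ` X) w) = N) =
          (finite (ml_crit I F X (Tw w)) \<and> card (ml_crit I F X (Tw w)) = N)"
      unfolding ml_crit_image[OF Xc] using finite_image_iff[OF inj] card_image[OF inj] by simp
  qed
  then show ?thesis unfolding MLD_def by simp
qed

end




definition aff :: "'i set \<Rightarrow> (('i \<Rightarrow> complex) \<Rightarrow> complex) \<Rightarrow> bool" where
  "aff I g \<longleftrightarrow> (\<exists>c M. \<forall>x. g x = c + (\<Sum>i\<in>I. M i * x i))"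

lemma aff_const: "aff I (\<lambda>x. c)"
  unfolding aff_def by (rule exI[of _ c], rule exI[of _ "\<lambda>i. 0"]) simp

lemma sum_delta_mult: "finite I \<Longrightarrow> i \<in> I \<Longrightarrow> (\<Sum>j\<in>I. (if j = i then d else 0) * x j) = d * (x i :: complex)"
proof -
  assume fin: "finite I" and i: "i \<in> I"
  have "(\<Sum>j\<in>I. (if j = i then d else 0) * x j) = (\<Sum>j\<in>I. if j = i then d * x j else 0)"
    by (rule sum.cong) auto
  also have "\<dots> = d * x i" using fin i by (simp add: sum.delta')
  finally show ?thesis .
qed

lemma aff_coord: "finite I \<Longrightarrow> i \<in> I \<Longrightarrow> aff I (\<lambda>x. d * x i)"
  unfolding aff_def
  by (rule exI[of _ 0], rule exI[of _ "\<lambda>j. if j = i then d else 0"]) (simp add: sum_delta_mult)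

lemma aff_if: "(P \<Longrightarrow> aff I f) \<Longrightarrow> (\<not> P \<Longrightarrow> aff I g) \<Longrightarrow> aff I (\<lambda>x. if P then f x else g x)"
  by (cases P) simp_all

lemma aff_canon:
  assumes fin: "finite I" and a: "aff I g"
  shows "g x = g (\<lambda>_. 0) + (\<Sum>i\<in>I. (g (\<lambda>j. if j = i then 1 else 0) - g (\<lambda>_. 0)) * x i)"
proof -
  from a obtain c M where cM: "\<And>x. g x = c + (\<Sum>i\<in>I. M i * x i)" unfolding aff_def by blast
  have g0: "g (\<lambda>_. 0) = c" using cM by simp
  have gi: "g (\<lambda>j. if j = i then 1 else 0) = c + M i" if "i \<in> I" for i
  proof -
    have "(\<Sum>j\<in>I. M j * (if j = i then 1 else 0)) = (\<Sum>j\<in>I. if j = i then M j else 0)"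
      by (rule sum.cong) auto
    also have "\<dots> = M i" using fin that by (simp add: sum.delta')
    finally show ?thesis using cM[of "\<lambda>j. if j = i then 1 else 0"] by simp
  qed
  have "(\<Sum>i\<in>I. (g (\<lambda>j. if j = i then 1 else 0) - g (\<lambda>_. 0)) * x i) = (\<Sum>i\<in>I. M i * x i)"
    by (rule sum.cong) (simp_all add: gi g0)
  then show ?thesis using cM g0 by simp
qed

lemma prod_list_ones: "(\<And>x. x \<in> set xs \<Longrightarrow> x = 1) \<Longrightarrow> prod_list xs = (1::'a::monoid_mult)"
  by (induction xs) auto

lemma det_unitri:
  assumes A: "A \<in> carrier_mat n n" and ut: "\<And>i j. i < n \<Longrightarrow> j < i \<Longrightarrow> A $$ (i,j) = 0"
    and d: "\<And>i. i < n \<Longrightarrow> A $$ (i,i) = 1"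
  shows "det A = (1 :: 'a :: comm_ring_1)"
proof -
  have "upper_triangular A" unfolding upper_triangular_def using A ut by auto
  then have "det A = prod_list (diag_mat A)" by (rule det_upper_triangular[OF _ A])
  also have "\<dots> = 1" by (rule prod_list_ones) (use A d in \<open>auto simp: diag_mat_def\<close>)
  finally show ?thesis .
qed

definition rep_prop :: "'i set \<Rightarrow> (('i \<Rightarrow> complex) \<Rightarrow> complex) \<Rightarrow> nat \<Rightarrow> (('i \<Rightarrow> complex) \<Rightarrow> complex mat) \<Rightarrow> complex vec \<Rightarrow> complex vec \<Rightarrow> bool" where
  "rep_prop I f n N a b \<longleftrightarrow> a \<in> carrier_vec n \<and> b \<in> carrier_vec n \<and>
     (\<forall>x. N x \<in> carrier_mat n n \<and> det (N x) = 1) \<and>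
     (\<forall>r c. r < n \<longrightarrow> c < n \<longrightarrow> aff I (\<lambda>x. N x $$ (r,c))) \<and>
     (\<forall>x. \<exists>y. y \<in> carrier_vec n \<and> N x *\<^sub>v y = a \<and> f x = b \<bullet> y)"

lemma rep_const: "rep_prop I (\<lambda>x. c) 1 (\<lambda>x. 1\<^sub>m 1) (vec 1 (\<lambda>_. c)) (vec 1 (\<lambda>_. 1))"
  unfolding rep_prop_def
proof (intro conjI allI impI)
  fix x
  show "\<exists>y. y \<in> carrier_vec 1 \<and> 1\<^sub>m 1 *\<^sub>v y = vec 1 (\<lambda>_. c) \<and> c = vec 1 (\<lambda>_. 1) \<bullet> y"
    by (rule exI[of _ "vec 1 (\<lambda>_. c)"]) (simp add: scalar_prod_def)
qed (auto intro: aff_const)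

lemma rep_coord:
  assumes fin: "finite I" and i: "i \<in> I"
  shows "rep_prop I (\<lambda>x. x i) 2 (\<lambda>x. mat 2 2 (\<lambda>(r,c). if r = c then 1 else if r = 0 \<and> c = 1 then - x i else 0))
     (vec 2 (\<lambda>j. if j = 0 then 0 else 1)) (vec 2 (\<lambda>j. if j = 0 then 1 else 0))"
  unfolding rep_prop_def
proof (intro conjI allI impI)
  fix x :: "'a \<Rightarrow> complex"
  show "mat 2 2 (\<lambda>(r,c). if r = c then 1 else if r = 0 \<and> c = 1 then - x i else 0) \<in> carrier_mat 2 2" by simp
  show "det (mat 2 2 (\<lambda>(r,c). if r = c then 1 else if r = 0 \<and> c = 1 then - x i else 0)) = 1"
    by (rule det_unitri[of _ 2]) auto
  show "\<exists>y. y \<in> carrier_vec 2 \<and>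
      mat 2 2 (\<lambda>(r,c). if r = c then 1 else if r = 0 \<and> c = 1 then - x i else 0) *\<^sub>v y = vec 2 (\<lambda>j. if j = 0 then 0 else 1) \<and>
      x i = vec 2 (\<lambda>j. if j = 0 then 1 else 0) \<bullet> y"
  proof (rule exI[of _ "vec 2 (\<lambda>j. if j = 0 then x i else 1)"], intro conjI)
    show "mat 2 2 (\<lambda>(r,c). if r = c then 1 else if r = 0 \<and> c = 1 then - x i else 0) *\<^sub>v vec 2 (\<lambda>j. if j = 0 then x i else 1)
      = vec 2 (\<lambda>j. if j = 0 then 0 else 1)"
      by (rule eq_vecI) (auto simp: scalar_prod_def row_def numeral_2_eq_2 lessThan_Suc atLeast0LessThan)
    show "x i = vec 2 (\<lambda>j. if j = 0 then 1 else 0) \<bullet> vec 2 (\<lambda>j. if j = 0 then x i else 1)"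
      by (auto simp: scalar_prod_def numeral_2_eq_2 lessThan_Suc atLeast0LessThan)
  qed simp
next
  fix r c :: nat assume "r < 2" "c < 2"
  then show "aff I (\<lambda>x. mat 2 2 (\<lambda>(r,c). if r = c then 1 else if r = 0 \<and> c = 1 then - x i else 0) $$ (r, c))"
    using aff_coord[OF fin i, of "-1"] aff_const by (auto intro!: aff_if)
qed auto


lemma fb_index:
  assumes "A \<in> carrier_mat n1 m1" "D \<in> carrier_mat n2 m2" "r < n1 + n2" "c < m1 + m2"
  shows "four_block_mat A B C D $$ (r,c) = (if r < n1 then if c < m1 then A $$ (r,c) else B $$ (r, c - m1)
     else if c < m1 then C $$ (r - n1, c) else D $$ (r - n1, c - m1))"
  using assms by simp

lemma zero_mat_mult_vec: "y \<in> carrier_vec m \<Longrightarrow> 0\<^sub>m n m *\<^sub>v y = (0\<^sub>v n :: complex vec)"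
  by (rule eq_vecI) (auto simp: scalar_prod_def)

lemma rep_add:
  assumes r1: "rep_prop I f n1 N1 a1 b1" and r2: "rep_prop I g n2 N2 a2 b2"
  shows "rep_prop I (\<lambda>x. f x + g x) (n1 + n2) (\<lambda>x. four_block_mat (N1 x) (0\<^sub>m n1 n2) (0\<^sub>m n2 n1) (N2 x))
     (a1 @\<^sub>v a2) (b1 @\<^sub>v b2)"
proof -
  have a1: "a1 \<in> carrier_vec n1" and b1: "b1 \<in> carrier_vec n1" and N1: "\<And>x. N1 x \<in> carrier_mat n1 n1"
    and d1: "\<And>x. det (N1 x) = 1" and af1: "\<And>r c. r < n1 \<Longrightarrow> c < n1 \<Longrightarrow> aff I (\<lambda>x. N1 x $$ (r,c))"
    and y1: "\<And>x. \<exists>y. y \<in> carrier_vec n1 \<and> N1 x *\<^sub>v y = a1 \<and> f x = b1 \<bullet> y"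
    using r1 unfolding rep_prop_def by blast+
  have a2: "a2 \<in> carrier_vec n2" and b2: "b2 \<in> carrier_vec n2" and N2: "\<And>x. N2 x \<in> carrier_mat n2 n2"
    and d2: "\<And>x. det (N2 x) = 1" and af2: "\<And>r c. r < n2 \<Longrightarrow> c < n2 \<Longrightarrow> aff I (\<lambda>x. N2 x $$ (r,c))"
    and y2: "\<And>x. \<exists>y. y \<in> carrier_vec n2 \<and> N2 x *\<^sub>v y = a2 \<and> g x = b2 \<bullet> y"
    using r2 unfolding rep_prop_def by blast+
  show ?thesis unfolding rep_prop_def
  proof (intro conjI allI impI)
    show "a1 @\<^sub>v a2 \<in> carrier_vec (n1 + n2)" using a1 a2 by simp
    show "b1 @\<^sub>v b2 \<in> carrier_vec (n1 + n2)" using b1 b2 by simp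
    fix x :: "'a \<Rightarrow> complex"
    show "four_block_mat (N1 x) (0\<^sub>m n1 n2) (0\<^sub>m n2 n1) (N2 x) \<in> carrier_mat (n1 + n2) (n1 + n2)"
      using N1 N2 by (intro four_block_carrier_mat) auto
    show "det (four_block_mat (N1 x) (0\<^sub>m n1 n2) (0\<^sub>m n2 n1) (N2 x)) = 1"
      by (subst det_four_block_mat_upper_right_zero[OF N1 refl _ N2]) (auto simp: d1 d2)
    obtain z1 where z1: "z1 \<in> carrier_vec n1" "N1 x *\<^sub>v z1 = a1" "f x = b1 \<bullet> z1" using y1 by blast
    obtain z2 where z2: "z2 \<in> carrier_vec n2" "N2 x *\<^sub>v z2 = a2" "g x = b2 \<bullet> z2" using y2 by blast
    show "\<exists>y. y \<in> carrier_vec (n1 + n2) \<and>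
         four_block_mat (N1 x) (0\<^sub>m n1 n2) (0\<^sub>m n2 n1) (N2 x) *\<^sub>v y = a1 @\<^sub>v a2 \<and>
         f x + g x = (b1 @\<^sub>v b2) \<bullet> y"
    proof (rule exI[of _ "z1 @\<^sub>v z2"], intro conjI)
      show "z1 @\<^sub>v z2 \<in> carrier_vec (n1 + n2)" using z1 z2 by simp
      have "four_block_mat (N1 x) (0\<^sub>m n1 n2) (0\<^sub>m n2 n1) (N2 x) *\<^sub>v (z1 @\<^sub>v z2)
          = (N1 x *\<^sub>v z1 + 0\<^sub>m n1 n2 *\<^sub>v z2) @\<^sub>v (0\<^sub>m n2 n1 *\<^sub>v z1 + N2 x *\<^sub>v z2)"
        by (rule four_block_mat_mult_vec[OF N1 _ _ N2 z1(1) z2(1)]) auto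
      also have "\<dots> = a1 @\<^sub>v a2"
        using z1 z2 a1 a2 by (simp add: zero_mat_mult_vec)
      finally show "four_block_mat (N1 x) (0\<^sub>m n1 n2) (0\<^sub>m n2 n1) (N2 x) *\<^sub>v (z1 @\<^sub>v z2) = a1 @\<^sub>v a2" .
      show "f x + g x = (b1 @\<^sub>v b2) \<bullet> (z1 @\<^sub>v z2)"
        using scalar_prod_append[OF b1 b2 z1(1) z2(1)] z1 z2 by simp
    qed
  next
    fix r c assume rc: "r < n1 + n2" "c < n1 + n2"
    have dims: "\<And>x. dim_row (N1 x) = n1" "\<And>x. dim_col (N1 x) = n1" "\<And>x. dim_row (N2 x) = n2" "\<And>x. dim_col (N2 x) = n2"
      using N1 N2 by auto
    show "aff I (\<lambda>x. four_block_mat (N1 x) (0\<^sub>m n1 n2) (0\<^sub>m n2 n1) (N2 x) $$ (r, c))"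
      unfolding fb_index[OF N1 N2 rc] by (intro aff_if af1 af2 aff_const) (use rc in auto)
  qed
qed

lemma rep_mult:
  assumes r1: "rep_prop I f n1 N1 a1 b1" and r2: "rep_prop I g n2 N2 a2 b2"
  shows "rep_prop I (\<lambda>x. f x * g x) (n1 + n2)
     (\<lambda>x. four_block_mat (N1 x) (mat n1 n2 (\<lambda>(r,c). - (a1 $ r * b2 $ c))) (0\<^sub>m n2 n1) (N2 x))
     (0\<^sub>v n1 @\<^sub>v a2) (b1 @\<^sub>v 0\<^sub>v n2)"
proof -
  have a1: "a1 \<in> carrier_vec n1" and b1: "b1 \<in> carrier_vec n1" and N1: "\<And>x. N1 x \<in> carrier_mat n1 n1"
    and d1: "\<And>x. det (N1 x) = 1" and af1: "\<And>r c. r < n1 \<Longrightarrow> c < n1 \<Longrightarrow> aff I (\<lambda>x. N1 x $$ (r,c))"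
    and y1: "\<And>x. \<exists>y. y \<in> carrier_vec n1 \<and> N1 x *\<^sub>v y = a1 \<and> f x = b1 \<bullet> y"
    using r1 unfolding rep_prop_def by blast+
  have a2: "a2 \<in> carrier_vec n2" and b2: "b2 \<in> carrier_vec n2" and N2: "\<And>x. N2 x \<in> carrier_mat n2 n2"
    and d2: "\<And>x. det (N2 x) = 1" and af2: "\<And>r c. r < n2 \<Longrightarrow> c < n2 \<Longrightarrow> aff I (\<lambda>x. N2 x $$ (r,c))"
    and y2: "\<And>x. \<exists>y. y \<in> carrier_vec n2 \<and> N2 x *\<^sub>v y = a2 \<and> g x = b2 \<bullet> y"
    using r2 unfolding rep_prop_def by blast+
  define C where "C = mat n1 n2 (\<lambda>(r,c). - (a1 $ r * b2 $ c))"
  have C: "C \<in> carrier_mat n1 n2" unfolding C_def by simp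
  show ?thesis unfolding rep_prop_def C_def[symmetric]
  proof (intro conjI allI impI)
    show "0\<^sub>v n1 @\<^sub>v a2 \<in> carrier_vec (n1 + n2)" using a2 by simp
    show "b1 @\<^sub>v 0\<^sub>v n2 \<in> carrier_vec (n1 + n2)" using b1 by simp
    fix x :: "'a \<Rightarrow> complex"
    show "four_block_mat (N1 x) C (0\<^sub>m n2 n1) (N2 x) \<in> carrier_mat (n1 + n2) (n1 + n2)"
      using N1 N2 C by (intro four_block_carrier_mat) auto
    show "det (four_block_mat (N1 x) C (0\<^sub>m n2 n1) (N2 x)) = 1"
      by (subst det_four_block_mat_lower_left_zero[OF N1 C refl N2]) (auto simp: d1 d2)
    obtain z1 where z1: "z1 \<in> carrier_vec n1" "N1 x *\<^sub>v z1 = a1" "f x = b1 \<bullet> z1" using y1 by blast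
    obtain z2 where z2: "z2 \<in> carrier_vec n2" "N2 x *\<^sub>v z2 = a2" "g x = b2 \<bullet> z2" using y2 by blast
    define s where "s = g x"
    show "\<exists>y. y \<in> carrier_vec (n1 + n2) \<and>
         four_block_mat (N1 x) C (0\<^sub>m n2 n1) (N2 x) *\<^sub>v y = 0\<^sub>v n1 @\<^sub>v a2 \<and>
         f x * g x = (b1 @\<^sub>v 0\<^sub>v n2) \<bullet> y"
    proof (rule exI[of _ "(s \<cdot>\<^sub>v z1) @\<^sub>v z2"], intro conjI)
      show "(s \<cdot>\<^sub>v z1) @\<^sub>v z2 \<in> carrier_vec (n1 + n2)" using z1 z2 by simp
      have "four_block_mat (N1 x) C (0\<^sub>m n2 n1) (N2 x) *\<^sub>v ((s \<cdot>\<^sub>v z1) @\<^sub>v z2)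
          = (N1 x *\<^sub>v (s \<cdot>\<^sub>v z1) + C *\<^sub>v z2) @\<^sub>v (0\<^sub>m n2 n1 *\<^sub>v (s \<cdot>\<^sub>v z1) + N2 x *\<^sub>v z2)"
        by (rule four_block_mat_mult_vec[OF N1 C _ N2]) (use z1 z2 in auto)
      also have "N1 x *\<^sub>v (s \<cdot>\<^sub>v z1) + C *\<^sub>v z2 = 0\<^sub>v n1"
      proof (rule eq_vecI)
        fix r assume "r < dim_vec (0\<^sub>v n1 :: complex vec)"
        then have r: "r < n1" by simp
        have e1: "(N1 x *\<^sub>v (s \<cdot>\<^sub>v z1)) $ r = s * a1 $ r"
          using mult_mat_vec[OF N1[of x] z1(1), of s] z2 z1 r N1 a1 by simp
        have "(C *\<^sub>v z2) $ r = (\<Sum>c<n2. - (a1 $ r * b2 $ c) * z2 $ c)"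
          using r z2 C unfolding C_def by (simp add: scalar_prod_def row_def atLeast0LessThan)
        also have "\<dots> = - a1 $ r * (\<Sum>c<n2. b2 $ c * z2 $ c)"
          by (simp add: sum_distrib_left sum_negf ac_simps)
        also have "(\<Sum>c<n2. b2 $ c * z2 $ c) = s"
          unfolding s_def z2(3) scalar_prod_def using z2(1) by (simp add: atLeast0LessThan)
        finally have e2: "(C *\<^sub>v z2) $ r = - a1 $ r * s" .
        show "(N1 x *\<^sub>v (s \<cdot>\<^sub>v z1) + C *\<^sub>v z2) $ r = 0\<^sub>v n1 $ r"
          using e1 e2 r N1 C by simp
      qed (use N1 C in simp)
      also have "0\<^sub>m n2 n1 *\<^sub>v (s \<cdot>\<^sub>v z1) + N2 x *\<^sub>v z2 = a2"
        using z1 z2 a2 by (simp add: zero_mat_mult_vec)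
      finally show "four_block_mat (N1 x) C (0\<^sub>m n2 n1) (N2 x) *\<^sub>v ((s \<cdot>\<^sub>v z1) @\<^sub>v z2) = 0\<^sub>v n1 @\<^sub>v a2" .
      have "(b1 @\<^sub>v 0\<^sub>v n2) \<bullet> ((s \<cdot>\<^sub>v z1) @\<^sub>v z2) = b1 \<bullet> (s \<cdot>\<^sub>v z1) + 0\<^sub>v n2 \<bullet> z2"
        by (rule scalar_prod_append[OF b1 _ _ z2(1)]) (use z1 in auto)
      also have "\<dots> = s * (b1 \<bullet> z1)" using z1 z2 b1 by simp
      finally show "f x * g x = (b1 @\<^sub>v 0\<^sub>v n2) \<bullet> ((s \<cdot>\<^sub>v z1) @\<^sub>v z2)"
        using z1(3) s_def by simp
    qed
  next
    fix r c assume rc: "r < n1 + n2" "c < n1 + n2"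
    have dims: "\<And>x. dim_row (N1 x) = n1" "\<And>x. dim_col (N1 x) = n1" "\<And>x. dim_row (N2 x) = n2" "\<And>x. dim_col (N2 x) = n2"
      using N1 N2 by auto
    show "aff I (\<lambda>x. four_block_mat (N1 x) C (0\<^sub>m n2 n1) (N2 x) $$ (r, c))"
      unfolding fb_index[OF N1 N2 rc] by (intro aff_if af1 af2 aff_const) (use rc in auto)
  qed
qed

lemma rep_exists:
  assumes fin: "finite I" and f: "f \<in> polyfun I"
  shows "\<exists>n N a b. rep_prop I f n N a b"
  using f
proof (induction rule: polyfun.induct)
  case (const c)
  then show ?case using rep_const by blast
next
  case (coord i)
  then show ?case using rep_coord[OF fin] by blast
next
  case (add f g)
  then show ?case using rep_add by blast
next
  case (mult f g)
  then show ?case using rep_mult by blast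
qed




lemma det_bordered:
  assumes N: "N \<in> carrier_mat n n" and a: "a \<in> carrier_vec n" and b: "b \<in> carrier_vec n"
    and y: "y \<in> carrier_vec n" and Ny: "N *\<^sub>v y = a"
  shows "det (four_block_mat (0\<^sub>m 1 1) (mat 1 n (\<lambda>(_,j). b $ j)) (mat n 1 (\<lambda>(i,_). a $ i)) N)
     = - (b \<bullet> y) * det (N :: complex mat)"
proof -
  define Rb where "Rb = (mat 1 n (\<lambda>(_,j). b $ j) :: complex mat)"
  define Ca where "Ca = (mat n 1 (\<lambda>(i,_). a $ i) :: complex mat)"
  define Cy where "Cy = (mat n 1 (\<lambda>(i,_). - y $ i) :: complex mat)"
  define K where "K = four_block_mat (0\<^sub>m 1 1) Rb Ca N"
  define E where "E = four_block_mat (1\<^sub>m 1) (0\<^sub>m 1 n) Cy (1\<^sub>m n)"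
  have Rb: "Rb \<in> carrier_mat 1 n" and Ca: "Ca \<in> carrier_mat n 1" and Cy: "Cy \<in> carrier_mat n 1"
    unfolding Rb_def Ca_def Cy_def by auto
  have K: "K \<in> carrier_mat (1 + n) (1 + n)" unfolding K_def using Rb Ca N by (intro four_block_carrier_mat) auto
  have E: "E \<in> carrier_mat (1 + n) (1 + n)" unfolding E_def using Cy by (intro four_block_carrier_mat) auto
  have KE: "K * E = four_block_mat (0\<^sub>m 1 1 * 1\<^sub>m 1 + Rb * Cy) (0\<^sub>m 1 1 * 0\<^sub>m 1 n + Rb * 1\<^sub>m n)
      (Ca * 1\<^sub>m 1 + N * Cy) (Ca * 0\<^sub>m 1 n + N * 1\<^sub>m n)"
    unfolding K_def E_def by (rule mult_four_block_mat[OF _ Rb Ca N _ _ Cy]) auto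
  have X1: "0\<^sub>m 1 1 * 1\<^sub>m 1 + Rb * Cy = mat 1 1 (\<lambda>_. - (b \<bullet> y))"
  proof (rule eq_matI)
    fix i j assume ij: "i < dim_row (mat 1 1 (\<lambda>_. - (b \<bullet> y)) :: complex mat)" "j < dim_col (mat 1 1 (\<lambda>_. - (b \<bullet> y)) :: complex mat)"
    then have i0: "i = 0" "j = 0" by auto
    have "(Rb * Cy) $$ (0, 0) = (\<Sum>k\<in>{0..<n}. b $ k * (- y $ k))"
      using Rb Cy unfolding Rb_def Cy_def by (simp add: scalar_prod_def row_def col_def)
    also have "\<dots> = - (b \<bullet> y)" using y by (simp add: scalar_prod_def sum_negf)
    finally show "(0\<^sub>m 1 1 * 1\<^sub>m 1 + Rb * Cy) $$ (i, j) = mat 1 1 (\<lambda>_. - (b \<bullet> y)) $$ (i, j)"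
      using i0 Rb Cy by simp
  qed (use Rb Cy in auto)
  have X2: "0\<^sub>m 1 1 * 0\<^sub>m 1 n + Rb * 1\<^sub>m n = Rb" using Rb by simp
  have X3: "Ca * 1\<^sub>m 1 + N * Cy = 0\<^sub>m n 1"
  proof (rule eq_matI)
    fix i j assume ij: "i < dim_row (0\<^sub>m n 1 :: complex mat)" "j < dim_col (0\<^sub>m n 1 :: complex mat)"
    then have i: "i < n" and j0: "j = 0" by auto
    have "(N * Cy) $$ (i, 0) = - (row N i \<bullet> y)"
      using N Cy i y unfolding Cy_def by (simp add: scalar_prod_def col_def sum_negf)
    also have "row N i \<bullet> y = a $ i" using Ny i N by (metis carrier_matD(1) index_mult_mat_vec)
    finally show "(Ca * 1\<^sub>m 1 + N * Cy) $$ (i, j) = 0\<^sub>m n 1 $$ (i, j)"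
      using i j0 Ca Cy N unfolding Ca_def by simp
  qed (use Ca Cy N in auto)
  have X4: "Ca * 0\<^sub>m 1 n + N * 1\<^sub>m n = N" using N Ca by simp
  have "det (K * E) = det (mat 1 1 (\<lambda>_. - (b \<bullet> y))) * det N"
    unfolding KE X1 X2 X3 X4 by (rule det_four_block_mat_lower_left_zero[OF _ Rb refl N]) simp
  also have "det (mat 1 1 (\<lambda>_. - (b \<bullet> y))) = - (b \<bullet> y)" by (subst det_single) auto
  finally have "det (K * E) = - (b \<bullet> y) * det N" .
  moreover have "det E = 1" unfolding E_def
    by (subst det_four_block_mat_upper_right_zero[OF _ refl Cy]) auto
  moreover have "det (K * E) = det K * det E" by (rule det_mult[OF K E])
  ultimately show ?thesis unfolding K_def Rb_def Ca_def by simp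
qed


lemma finite_symidx2: "finite (symidx m)"
proof -
  have "symidx m \<subseteq> {..<m} \<times> {..<m}" unfolding symidx_def by auto
  then show ?thesis by (rule finite_subset) auto
qed

lemma big_construction:
  assumes fin: "finite I" and F: "F \<in> polyfun I"
  shows "\<exists>m A bb MM pos c. embed_ml I (symidx m) A bb MM pos F (detF m) c"
proof -
  obtain n N a b where rp: "rep_prop I F n N a b" using rep_exists[OF fin F] by blast
  have a: "a \<in> carrier_vec n" and b: "b \<in> carrier_vec n" and N: "\<And>x. N x \<in> carrier_mat n n"
    and dN: "\<And>x. det (N x) = 1" and afN: "\<And>r c. r < n \<Longrightarrow> c < n \<Longrightarrow> aff I (\<lambda>x. N x $$ (r,c))"
    and yN: "\<And>x. \<exists>y. y \<in> carrier_vec n \<and> N x *\<^sub>v y = a \<and> F x = b \<bullet> y"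
    using rp unfolding rep_prop_def by blast+
  define k where "k = card I"
  obtain e where e: "bij_betw e {0..<k} I" using ex_bij_betw_nat_finite[OF fin] unfolding k_def by blast
  have eI: "j < k \<Longrightarrow> e j \<in> I" for j using e unfolding bij_betw_def by auto
  define n' where "n' = (1 + n) + (k + 1)"
  define m where "m = n' + n'"
  define Rb where "Rb = (mat 1 n (\<lambda>(_,j). b $ j) :: complex mat)"
  define Ca where "Ca = (mat n 1 (\<lambda>(i,_). a $ i) :: complex mat)"
  define K where "K x = four_block_mat (0\<^sub>m 1 1) Rb Ca (N x)" for x
  define U where "U x = (mat (k + 1) (k + 1) (\<lambda>(r,c). if r = c then 1 else if r = 0 \<and> 0 < c then x (e (c - 1)) else 0) :: complex mat)" for x
  define B where "B x = four_block_mat (K x) (0\<^sub>m (1 + n) (k + 1)) (0\<^sub>m (k + 1) (1 + n)) (U x)" for x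
  define S where "S x = four_block_mat (0\<^sub>m n' n') (B x) (transpose_mat (B x)) (0\<^sub>m n' n')" for x
  define A where "A x = (\<lambda>q. if q \<in> symidx m then S x $$ q else 0)" for x
  define bb where "bb = A (\<lambda>_. 0)"
  define MM where "MM q i = A (\<lambda>j. if j = i then 1 else 0) q - A (\<lambda>_. 0) q" for q i
  define pos where "pos i = (1 + n, n' + ((1 + n) + (the_inv_into {0..<k} e i + 1)))" for i
  have Rb: "Rb \<in> carrier_mat 1 n" and Ca: "Ca \<in> carrier_mat n 1" unfolding Rb_def Ca_def by auto
  have K: "K x \<in> carrier_mat (1 + n) (1 + n)" for x unfolding K_def using Rb Ca N by (intro four_block_carrier_mat) auto
  have U: "U x \<in> carrier_mat (k + 1) (k + 1)" for x unfolding U_def by simp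
  have B: "B x \<in> carrier_mat n' n'" for x unfolding B_def n'_def using K U by (intro four_block_carrier_mat) auto
  have S: "S x \<in> carrier_mat m m" for x unfolding S_def m_def using B by (intro four_block_carrier_mat) auto
  have dK: "det (K x) = - F x" for x
  proof -
    obtain y where y: "y \<in> carrier_vec n" "N x *\<^sub>v y = a" "F x = b \<bullet> y" using yN by blast
    show ?thesis unfolding K_def Rb_def Ca_def using det_bordered[OF N a b y(1) y(2)] dN y(3) by simp
  qed
  have dU: "det (U x) = 1" for x by (rule det_unitri[OF U]) (auto simp: U_def)
  have dB: "det (B x) = - F x" for x
    unfolding B_def by (subst det_four_block_mat_upper_right_zero[OF K refl _ U]) (auto simp: dK dU)
  have dS: "det (S x) = (-1) ^ n' * (F x)^2" for x
  proof -
    have Bt: "transpose_mat (B x) \<in> carrier_mat n' n'" using B by simp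
    have "det (S x) = det (0\<^sub>m n' n' * 0\<^sub>m n' n' - B x * transpose_mat (B x))"
      unfolding S_def by (rule det_four_block_mat[OF _ B[of x] Bt]) (use Bt B[of x] in auto)
    also have "0\<^sub>m n' n' * 0\<^sub>m n' n' - B x * transpose_mat (B x) = (-1) \<cdot>\<^sub>m (B x * transpose_mat (B x))"
      by (rule eq_matI) (use B[of x] Bt in auto)
    also have "det \<dots> = (-1) ^ n' * (det (B x) * det (transpose_mat (B x)))"
      using B[of x] Bt by (simp add: det_mult[OF B Bt])
    also have "det (transpose_mat (B x)) = det (B x)" by (rule det_transpose[OF B])
    finally show ?thesis unfolding dB by (simp add: power2_eq_square)
  qed
  have afK: "aff I (\<lambda>x. K x $$ (r,c))" if "r < 1 + n" "c < 1 + n" for r c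
    unfolding K_def fb_index[OF zero_carrier_mat N that] by (intro aff_if afN aff_const) (use that in auto)
  have afU: "aff I (\<lambda>x. U x $$ (r,c))" if "r < k + 1" "c < k + 1" for r c
  proof -
    have "aff I (\<lambda>x. if r = c then 1 else if r = 0 \<and> 0 < c then x (e (c - 1)) else 0)"
      by (intro aff_if aff_const aff_coord[OF fin, of _ 1, simplified] eI) (use that in auto)
    then show ?thesis unfolding U_def using that by simp
  qed
  have afB: "aff I (\<lambda>x. B x $$ (r,c))" if "r < n'" "c < n'" for r c
    unfolding B_def fb_index[OF K U that[unfolded n'_def]] by (intro aff_if afK afU aff_const) (use that n'_def in auto)
  have afS: "aff I (\<lambda>x. S x $$ (r,c))" if "r < m" "c < m" for r c
  proof -
    have "aff I (\<lambda>x. if r < n' then if c < n' then 0 else B x $$ (r, c - n')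
        else if c < n' then B x $$ (c, r - n') else 0)"
      by (intro aff_if afB aff_const) (use that m_def in auto)
    moreover have "S x $$ (r,c) = (if r < n' then if c < n' then 0 else B x $$ (r, c - n')
        else if c < n' then B x $$ (c, r - n') else 0)" for x
      unfolding S_def using that B[of x] m_def by auto
    ultimately show ?thesis by simp
  qed
  have symS: "S x $$ (r,c) = S x $$ (c,r)" if "r < m" "c < m" for x r c
    unfolding S_def using that B[of x] m_def by auto
  have symm: "symmat m (A x) = S x" for x
  proof (rule eq_matI)
    fix i j assume ij: "i < dim_row (S x)" "j < dim_col (S x)"
    then have i: "i < m" and j: "j < m" using S[of x] by auto
    have "(min i j, max i j) \<in> symidx m" unfolding symidx_def using i j by auto
    then have "symmat m (A x) $$ (i,j) = S x $$ (min i j, max i j)"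
      unfolding symmat_def A_def using i j by simp
    also have "\<dots> = S x $$ (i,j)" using symS[OF i j] symS[OF j i] by (cases "i \<le> j") (auto simp: min_def max_def)
    finally show "symmat m (A x) $$ (i,j) = S x $$ (i,j)" .
  qed (use S[of x] in \<open>auto simp: symmat_def\<close>)
  have Apos: "A x (pos i) = x i" if i: "i \<in> I" for x i
  proof -
    define j where "j = the_inv_into {0..<k} e i"
    have j: "j < k" "e j = i" using e i unfolding j_def
      by (auto simp: bij_betw_def the_inv_into_f_f f_the_inv_into_f intro!: the_inv_into_into[of e, simplified])
    have ps: "pos i \<in> symidx m" unfolding pos_def symidx_def m_def n'_def j_def[symmetric] using j by auto
    have "A x (pos i) = S x $$ (1 + n, n' + ((1 + n) + (j + 1)))" unfolding A_def using ps pos_def j_def by simp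
    also have "\<dots> = B x $$ (1 + n, (1 + n) + (j + 1))" unfolding S_def using B j m_def n'_def by simp
    also have "\<dots> = U x $$ (0, j + 1)" unfolding B_def using K[of x] U[of x] j by simp
    also have "\<dots> = x i" unfolding U_def using j by simp
    finally show ?thesis .
  qed
  have "embed_ml I (symidx m) A bb MM pos F (detF m) ((-1) ^ n')"
  proof (unfold_locales)
    show "finite I" by (rule fin)
    show "finite (symidx m)" by (rule finite_symidx2)
    fix x :: "'a \<Rightarrow> complex"
    show "A x = (\<lambda>q. bb q + (\<Sum>i\<in>I. MM q i * x i))"
    proof
      fix q show "A x q = bb q + (\<Sum>i\<in>I. MM q i * x i)"
      proof (cases "q \<in> symidx m")
        case True
        obtain r c where q: "q = (r,c)" by (cases q)
        have rc: "r < m" "c < m" using True q unfolding symidx_def by auto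
        show ?thesis unfolding bb_def MM_def A_def using True aff_canon[OF fin afS[OF rc], of x] q by simp
      next
        case False
        then show ?thesis unfolding bb_def MM_def A_def by simp
      qed
    qed
    show "A x \<in> cspace (symidx m)" unfolding A_def cspace_def by auto
    show "detF m (A x) = (-1) ^ n' * (F x)^2" unfolding detF_def symm dS ..
  next
    fix i assume i: "i \<in> I"
    show "pos i \<in> symidx m"
    proof -
      have "the_inv_into {0..<k} e i < k" using e i
        by (auto simp: bij_betw_def the_inv_into_f_f)
      then show ?thesis unfolding pos_def symidx_def m_def n'_def by auto
    qed
    fix x :: "'a \<Rightarrow> complex"
    show "A x (pos i) = x i" by (rule Apos[OF i])
  next
    show "F \<in> polyfun I" by (rule F)
    show "(-1) ^ n' \<noteq> (0::complex)" by simp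
  qed
  then show ?thesis by blast
qed



theorem proposition2p3:
  shows "(\<forall>m X. irreducible_variety (symidx m) X \<longrightarrow>
            MLD (symidx m) (detF m) X = gaussian_MLD m X)
       \<and> (\<forall>(I :: 'i set) X F. finite I \<and> irreducible_variety I X \<and> F \<in> polyfun I \<longrightarrow>
            (\<exists>m A b M. A ` cspace I \<subseteq> cspace (symidx m) \<and>
               (\<forall>x\<in>cspace I. A x = (\<lambda>k. b k + (\<Sum>i\<in>I. M k i * x i))) \<and>
               inj_on A (cspace I) \<and>
               MLD I F X = MLD (symidx m) (detF m) (A ` X)))"
proof (intro conjI allI impI)
  fix m and X :: "(nat \<times> nat \<Rightarrow> complex) set"
  show "MLD (symidx m) (detF m) X = gaussian_MLD m X" by (rule part_a)
next
  fix I :: "'i set" and X and F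
  assume H: "finite I \<and> irreducible_variety I X \<and> F \<in> polyfun I"
  then have fin: "finite I" and irr: "irreducible_variety I X" and F: "F \<in> polyfun I" by auto
  have Xc: "X \<subseteq> cspace I"
    using irr affine_variety_subset unfolding irreducible_variety_def by blast
  obtain m A bb MM pos c where em: "embed_ml I (symidx m) A bb MM pos F (detF m) c"
    using big_construction[OF fin F] by blast
  interpret em: embed_ml I "symidx m" A bb MM pos F "detF m" c by (rule em)
  show "\<exists>m A b M. A ` cspace I \<subseteq> cspace (symidx m) \<and>
               (\<forall>x\<in>cspace I. A x = (\<lambda>k. b k + (\<Sum>i\<in>I. M k i * x i))) \<and>
               inj_on A (cspace I) \<and>
               MLD I F X = MLD (symidx m) (detF m) (A ` X)"
  proof (intro exI conjI)
    show "A ` cspace I \<subseteq> cspace (symidx m)" using em.A_cs by blast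
    show "\<forall>x\<in>cspace I. A x = (\<lambda>k. bb k + (\<Sum>i\<in>I. MM k i * x i))" using em.A_eq by blast
    show "inj_on A (cspace I)" by (rule em.inj_A)
    show "MLD I F X = MLD (symidx m) (detF m) (A ` X)" using em.MLD_image[OF Xc] by simp
  qed
qed

end
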